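(* Let $m,n\ge 3$ and let $e$ be any hyperedge of $\mathcal{C}^3_{m,n}$. Then $\mathcal{E_S}(\mathcal{C}^3_{m,n})>\mathcal{E_S}(\mathcal{C}^3_{m,n}-e)$.
   Context: For a hypergraph $\mathcal{H}$ and distinct vertices $i,j$, the co-degree $c_{ij}$ is the number of hyperedges containing both $i$ and $j$. The Seidel matrix $\mathcal{S}(\mathcal{H})$ has zero diagonal and $(i,j)$-entry $1-2c_{ij}$ for $i\neq j$. The Seidel energy $\mathcal{E_S}(\mathcal{H})$ is the sum of the absolute values of the eigenvalues of $\mathcal{S}(\mathcal{H})$. The complete $3$-uniform bipartite hypergraph $\mathcal{C}^3_{m,n}=(V_1,V_2,E)$ has vertex set $V_1\sqcup V_2$, $|V_1|=m$, $|V_2|=n$, and $E$ = all $3$-subsets meeting both $V_1$ and $V_2$. For a hyperedge $e$, $\mathcal{H}-e$ denotes the hypergraph with the same vertex set and hyperedge set $E\setminus\{e\}$. *)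

theory Defs
  imports "Jordan_Normal_Form.Char_Poly" "HOL-Computational_Algebra.Polynomial"
begin

text \<open>A hypergraph on the vertex set {0..<N} is given by its set of hyperedges
  (each a set of vertices).  Co-degree of two vertices.\<close>
definition codegree :: "nat set set \<Rightarrow> nat \<Rightarrow> nat \<Rightarrow> nat" where
  "codegree E i j = card {e \<in> E. i \<in> e \<and> j \<in> e}"

definition seidel_matrix :: "nat \<Rightarrow> nat set set \<Rightarrow> real mat" where
  "seidel_matrix N E = mat N N (\<lambda>(i, j). if i = j then 0 else 1 - 2 * real (codegree E i j))"

text \<open>Seidel energy: sum of absolute values of the eigenvalues (with algebraic
  multiplicity), i.e. the roots of the characteristic polynomial over the complex numbers.\<close>
definition seidel_energy :: "nat \<Rightarrow> nat set set \<Rightarrow> real" where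
  "seidel_energy N E =
     sum_mset (image_mset cmod (proots (char_poly (map_mat complex_of_real (seidel_matrix N E)))))"

text \<open>Complete 3-uniform bipartite hypergraph C^3_{m,n}: V1 = {0..<m}, V2 = {m..<m+n}.\<close>
definition complete_bip3_edges :: "nat \<Rightarrow> nat \<Rightarrow> nat set set" where
  "complete_bip3_edges m n =
     {e. e \<subseteq> {0..<m+n} \<and> card e = 3 \<and> e \<inter> {0..<m} \<noteq> {} \<and> e \<inter> {m..<m+n} \<noteq> {}}"

end

theory Submission
  imports Defs "Jordan_Normal_Form.Schur_Decomposition"
begin

lemma pd2:
  fixes a b c x y :: real
  assumes "a > 0" "a*c - b^2 > 0" "x \<noteq> 0 \<or> y \<noteq> 0"
  shows "a*x^2 + 2*b*x*y + c*y^2 > 0"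
proof -
  have e: "a*(a*x^2 + 2*b*x*y + c*y^2) = (a*x + b*y)^2 + (a*c - b^2)*y^2"
    by (simp add: algebra_simps power2_eq_square)
  have "a*(a*x^2 + 2*b*x*y + c*y^2) > 0"
  proof (cases "y = 0")
    case True
    then have "x \<noteq> 0" using assms(3) by auto
    then show ?thesis unfolding e using True assms(1) by simp
  next
    case False
    then have "(a*c - b^2)*y^2 > 0" using assms(2) by simp
    then show ?thesis unfolding e by (simp add: add_nonneg_pos)
  qed
  then show ?thesis using assms(1) by (simp add: zero_less_mult_iff)
qed

definition det3 :: "real \<Rightarrow> real \<Rightarrow> real \<Rightarrow> real \<Rightarrow> real \<Rightarrow> real \<Rightarrow> real" where
  "det3 a11 a12 a13 a22 a23 a33 = a11*(a22*a33 - a23^2) - a12*(a12*a33 - a23*a13) + a13*(a12*a23 - a22*a13)"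

definition Q3 :: "real \<Rightarrow> real \<Rightarrow> real \<Rightarrow> real \<Rightarrow> real \<Rightarrow> real \<Rightarrow> real \<Rightarrow> real \<Rightarrow> real \<Rightarrow> real" where
  "Q3 a11 a12 a13 a22 a23 a33 x1 x2 x3 = a11*x1^2 + a22*x2^2 + a33*x3^2 + 2*a12*x1*x2 + 2*a13*x1*x3 + 2*a23*x2*x3"

lemma pd3:
  assumes "a11 > 0" "a11*a22 - a12^2 > 0" "det3 a11 a12 a13 a22 a23 a33 > 0"
    and "x1 \<noteq> 0 \<or> x2 \<noteq> 0 \<or> x3 \<noteq> 0"
  shows "Q3 a11 a12 a13 a22 a23 a33 x1 x2 x3 > 0"
proof -
  define h22 where "h22 = a11*a22 - a12^2"
  define h23 where "h23 = a11*a23 - a12*a13"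
  define h33 where "h33 = a11*a33 - a13^2"
  have e: "a11 * Q3 a11 a12 a13 a22 a23 a33 x1 x2 x3 = (a11*x1 + a12*x2 + a13*x3)^2 + (h22*x2^2 + 2*h23*x2*x3 + h33*x3^2)"
    unfolding Q3_def h22_def h23_def h33_def by (simp add: algebra_simps power2_eq_square)
  have hd: "h22*h33 - h23^2 = a11 * det3 a11 a12 a13 a22 a23 a33"
    unfolding det3_def h22_def h23_def h33_def by (simp add: algebra_simps power2_eq_square)
  have "a11 * Q3 a11 a12 a13 a22 a23 a33 x1 x2 x3 > 0"
  proof (cases "x2 = 0 \<and> x3 = 0")
    case True
    then have "x1 \<noteq> 0" using assms(4) by auto
    then show ?thesis unfolding e using True assms(1) by simp
  next
    case False
    have "h22*x2^2 + 2*h23*x2*x3 + h33*x3^2 > 0"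
      by (rule pd2) (use assms(2,3) False hd h22_def assms(1) in auto)
    then show ?thesis unfolding e by (simp add: add_nonneg_pos)
  qed
  then show ?thesis using assms(1) by (simp add: zero_less_mult_iff)
qed

definition det4 :: "real \<Rightarrow> real \<Rightarrow> real \<Rightarrow> real \<Rightarrow> real \<Rightarrow> real \<Rightarrow> real \<Rightarrow> real \<Rightarrow> real \<Rightarrow> real \<Rightarrow> real" where
  "det4 a11 a12 a13 a14 a22 a23 a24 a33 a34 a44 =
     a11 * det3 a22 a23 a24 a33 a34 a44
   - a12 * (a12*(a33*a44 - a34^2) - a23*(a13*a44 - a34*a14) + a24*(a13*a34 - a33*a14))
   + a13 * (a12*(a23*a44 - a24*a34) - a22*(a13*a44 - a14*a34) + a24*(a13*a24 - a23*a14))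
   - a14 * (a12*(a23*a34 - a24*a33) - a22*(a13*a34 - a14*a33) + a23*(a13*a24 - a14*a23))"

definition Q4 where
  "Q4 a11 a12 a13 a14 a22 a23 a24 a33 a34 a44 x1 x2 x3 x4 =
     a11*x1^2 + a22*x2^2 + a33*x3^2 + a44*x4^2 + 2*a12*x1*x2 + 2*a13*x1*x3 + 2*a14*x1*x4
     + 2*a23*x2*x3 + 2*a24*x2*x4 + 2*a34*x3*x4"

lemma pd4:
  fixes a11 a12 a13 a14 a22 a23 a24 a33 a34 a44 x1 x2 x3 x4 :: real
  assumes "a11 > 0" "a11*a22 - a12^2 > 0" "det3 a11 a12 a13 a22 a23 a33 > 0"
    "det4 a11 a12 a13 a14 a22 a23 a24 a33 a34 a44 > 0"
    and "x1 \<noteq> 0 \<or> x2 \<noteq> 0 \<or> x3 \<noteq> 0 \<or> x4 \<noteq> 0"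
  shows "Q4 a11 a12 a13 a14 a22 a23 a24 a33 a34 a44 x1 x2 x3 x4 > 0"
proof -
  define h22 where "h22 = a11*a22 - a12^2"
  define h23 where "h23 = a11*a23 - a12*a13"
  define h24 where "h24 = a11*a24 - a12*a14"
  define h33 where "h33 = a11*a33 - a13^2"
  define h34 where "h34 = a11*a34 - a13*a14"
  define h44 where "h44 = a11*a44 - a14^2"
  have e: "a11 * Q4 a11 a12 a13 a14 a22 a23 a24 a33 a34 a44 x1 x2 x3 x4 =
     (a11*x1 + a12*x2 + a13*x3 + a14*x4)^2 + Q3 h22 h23 h24 h33 h34 h44 x2 x3 x4"
    unfolding Q4_def Q3_def h22_def h23_def h24_def h33_def h34_def h44_def
    by (simp add: algebra_simps power2_eq_square)
  have hd2: "h22*h33 - h23^2 = a11 * det3 a11 a12 a13 a22 a23 a33"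
    unfolding det3_def h22_def h23_def h33_def by (simp add: algebra_simps power2_eq_square)
  have hd3: "det3 h22 h23 h24 h33 h34 h44 = a11^2 * det4 a11 a12 a13 a14 a22 a23 a24 a33 a34 a44"
    unfolding det3_def det4_def h22_def h23_def h24_def h33_def h34_def h44_def
    by (simp add: algebra_simps power2_eq_square)
  have "a11 * Q4 a11 a12 a13 a14 a22 a23 a24 a33 a34 a44 x1 x2 x3 x4 > 0"
  proof (cases "x2 = 0 \<and> x3 = 0 \<and> x4 = 0")
    case True
    then have "x1 \<noteq> 0" using assms(5) by auto
    then show ?thesis unfolding e Q3_def using True assms(1) by simp
  next
    case False
    have "Q3 h22 h23 h24 h33 h34 h44 x2 x3 x4 > 0"
      by (rule pd3) (use assms(1-4) False hd2 hd3 h22_def in auto)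
    then show ?thesis unfolding e by (simp add: add_nonneg_pos)
  qed
  then show ?thesis using assms(1) by (simp add: zero_less_mult_iff)
qed


definition TT :: "real \<Rightarrow> real \<Rightarrow> real" where
  "TT m n = (1-2*n)*(m-1) + (1-2*m)*(n-1)"
definition DD :: "real \<Rightarrow> real \<Rightarrow> real" where
  "DD m n = ((1-2*n)*(m-1))*((1-2*m)*(n-1)) - (5-2*m-2*n)^2*m*n"

definition QW :: "real \<Rightarrow> real \<Rightarrow> real \<Rightarrow> real \<Rightarrow> real \<Rightarrow> real \<Rightarrow> real \<Rightarrow> real" where
  "QW m n c y0 y1 y2 y3 = Q4 (-c) (-4*n - 4*m + 14) (-2*m*n - 2*m^2 + 4*n + 9*m - 10) (-2*m*n + n + 2*m - 1) (-2*c - 4*n + 6) (-4*m*n + 8*n + 2*m - 4) (-4*n^2 - 4*m*n + 14*n + 4*m - 10) (-2*m^2*n - m*c + 10*m*n + m^2 + 2*c - 12*n - 5*m + 6) (-2*m*n^2 - 2*m^2*n + 4*n^2 + 11*m*n + 2*m^2 - 14*n - 9*m + 10) (-2*m*n^2 - n*c + n^2 + 6*m*n + c - 3*n - 4*m + 2) y2 y1 y0 y3"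

lemma minor2_eq: fixes m n c :: real shows "(-c)*(-2*c - 4*n + 6) - (-4*n - 4*m + 14)^2 = (8*m*n^3 + 8*m^2*n^2 + 8*m^3*n - 28*m*n^2 - 28*m^2*n - 20*n^2 - 20*m^2 + 118*n + 118*m - 198) + (-8*m*n + 10*n + 6*m - 10) * c + (2) * (c^2 - TT m n * c + DD m n)"
  unfolding det3_def det4_def TT_def DD_def by Groebner_Basis.algebra

lemma minor2_A: fixes x y :: real assumes "0 \<le> x" "0 \<le> y" shows "0 < (582 + 538*x + 538*y + 184*x^2 + 184*y^2 + 384*x*y + 92*x^2*y + 92*x*y^2 + 24*x^3 + 24*y^3 + 8*x^2*y^2 + 8*x^3*y + 8*x*y^3)"
  using assms by (intro add_pos_nonneg add_nonneg_nonneg mult_nonneg_nonneg zero_le_power) auto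

lemma minor2_Ash: fixes m n :: real shows "(8*m*n^3 + 8*m^2*n^2 + 8*m^3*n - 28*m*n^2 - 28*m^2*n - 20*n^2 - 20*m^2 + 118*n + 118*m - 198) = (582 + 538*(m-3) + 538*(n-3) + 184*(m-3)^2 + 184*(n-3)^2 + 384*(m-3)*(n-3) + 92*(m-3)^2*(n-3) + 92*(m-3)*(n-3)^2 + 24*(m-3)^3 + 24*(n-3)^3 + 8*(m-3)^2*(n-3)^2 + 8*(m-3)^3*(n-3) + 8*(m-3)*(n-3)^3)"
  by Groebner_Basis.algebra

lemma minor2_B: fixes x y :: real assumes "0 \<le> x" "0 \<le> y" shows "0 \<le> (34 + 14*y + 18*x + 8*x*y)"
  using assms by (intro add_nonneg_nonneg mult_nonneg_nonneg zero_le_power) auto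

lemma minor2_Bsh: fixes m n :: real shows "(-8*m*n + 10*n + 6*m - 10) = - (34 + 14*(n-3) + 18*(m-3) + 8*(m-3)*(n-3))"
  by Groebner_Basis.algebra

lemma minor3_eq: fixes m n c :: real shows "det3 (-c) (-4*n - 4*m + 14) (-2*m*n - 2*m^2 + 4*n + 9*m - 10) (-2*c - 4*n + 6) (-4*m*n + 8*n + 2*m - 4) (-2*m^2*n - m*c + 10*m*n + m^2 + 2*c - 12*n - 5*m + 6) = (16*m^3*n^4 + 16*m^4*n^3 + 16*m^5*n^2 - 24*m^2*n^4 - 96*m^3*n^3 - 96*m^4*n^2 - 16*m^5*n - 16*m*n^4 + 92*m^2*n^3 + 204*m^3*n^2 + 80*m^4*n + 68*m*n^3 - 84*m^2*n^2 - 144*m^3*n + 8*n^3 - 42*m*n^2 + 250*m^2*n + 52*m^3 - 188*n^2 - 746*m*n - 346*m^2 + 876*n + 808*m - 648) + (-8*m^2*n^3 - 24*m^3*n^2 - 8*m^4*n + 16*m*n^3 + 96*m^2*n^2 + 88*m^3*n + 8*m^4 - 94*m*n^2 - 246*m^2*n - 64*m^3 - 4*n^2 + 158*m*n + 126*m^2 + 92*n + 40*m - 200) * c + (4*m^2*n - 2*m*c - 6*m*n - 4*m^2 + 4*c - 4*n + 12*m - 8) * (c^2 - TT m n * c + DD m n)"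
  unfolding det3_def det4_def TT_def DD_def by Groebner_Basis.algebra

lemma minor3_A: fixes x y :: real assumes "0 \<le> x" "0 \<le> y" shows "0 < (10488 + 22324*x + 14124*y + 17180*x^2 + 28258*x*y + 7318*y^2 + 6496*x^3 + 19726*x^2*y + 13566*x*y^2 + 1760*y^3 + 6648*x^3*y + 8196*x^2*y^2 + 3020*x*y^3 + 1248*x^4 + 168*y^4 + 1136*x^4*y + 2220*x^3*y^2 + 1532*x^2*y^3 + 272*x*y^4 + 96*x^5 + 288*x^3*y^3 + 288*x^4*y^2 + 120*x^2*y^4 + 80*x^5*y + 16*x^4*y^3 + 16*x^5*y^2 + 16*x^3*y^4)"
  using assms by (intro add_pos_nonneg add_nonneg_nonneg mult_nonneg_nonneg zero_le_power) auto

lemma minor3_Ash: fixes m n :: real shows "(16*m^3*n^4 + 16*m^4*n^3 + 16*m^5*n^2 - 24*m^2*n^4 - 96*m^3*n^3 - 96*m^4*n^2 - 16*m^5*n - 16*m*n^4 + 92*m^2*n^3 + 204*m^3*n^2 + 80*m^4*n + 68*m*n^3 - 84*m^2*n^2 - 144*m^3*n + 8*n^3 - 42*m*n^2 + 250*m^2*n + 52*m^3 - 188*n^2 - 746*m*n - 346*m^2 + 876*n + 808*m - 648) = (10488 + 22324*(m-3) + 14124*(n-3) + 17180*(m-3)^2 + 28258*(m-3)*(n-3) + 7318*(n-3)^2 + 6496*(m-3)^3 + 19726*(m-3)^2*(n-3) + 13566*(m-3)*(n-3)^2 + 1760*(n-3)^3 + 6648*(m-3)^3*(n-3) + 8196*(m-3)^2*(n-3)^2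 + 3020*(m-3)*(n-3)^3 + 1248*(m-3)^4 + 168*(n-3)^4 + 1136*(m-3)^4*(n-3) + 2220*(m-3)^3*(n-3)^2 + 1532*(m-3)^2*(n-3)^3 + 272*(m-3)*(n-3)^4 + 96*(m-3)^5 + 288*(m-3)^3*(n-3)^3 + 288*(m-3)^4*(n-3)^2 + 120*(m-3)^2*(n-3)^4 + 80*(m-3)^5*(n-3) + 16*(m-3)^4*(n-3)^3 + 16*(m-3)^5*(n-3)^2 + 16*(m-3)^3*(n-3)^4)"
  by Groebner_Basis.algebra

lemma minor3_B: fixes x y :: real assumes "0 \<le> x" "0 \<le> y" shows "0 \<le> (1064 + 1844*x + 988*y + 972*x^2 + 1666*x*y + 286*y^2 + 822*x^2*y + 454*x*y^2 + 208*x^3 + 24*y^3 + 192*x^2*y^2 + 16*x^4 + 152*x^3*y + 32*x*y^3 + 24*x^3*y^2 + 8*x^4*y + 8*x^2*y^3)"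
  using assms by (intro add_nonneg_nonneg mult_nonneg_nonneg zero_le_power) auto

lemma minor3_Bsh: fixes m n :: real shows "(-8*m^2*n^3 - 24*m^3*n^2 - 8*m^4*n + 16*m*n^3 + 96*m^2*n^2 + 88*m^3*n + 8*m^4 - 94*m*n^2 - 246*m^2*n - 64*m^3 - 4*n^2 + 158*m*n + 126*m^2 + 92*n + 40*m - 200) = - (1064 + 1844*(m-3) + 988*(n-3) + 972*(m-3)^2 + 1666*(m-3)*(n-3) + 286*(n-3)^2 + 822*(m-3)^2*(n-3) + 454*(m-3)*(n-3)^2 + 208*(m-3)^3 + 24*(n-3)^3 + 192*(m-3)^2*(n-3)^2 + 16*(m-3)^4 + 152*(m-3)^3*(n-3) + 32*(m-3)*(n-3)^3 + 24*(m-3)^3*(n-3)^2 + 8*(m-3)^4*(n-3) + 8*(m-3)^2*(n-3)^3)"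
  by Groebner_Basis.algebra

lemma minor4_eq: fixes m n c :: real shows "det4 (-c) (-4*n - 4*m + 14) (-2*m*n - 2*m^2 + 4*n + 9*m - 10) (-2*m*n + n + 2*m - 1) (-2*c - 4*n + 6) (-4*m*n + 8*n + 2*m - 4) (-4*n^2 - 4*m*n + 14*n + 4*m - 10) (-2*m^2*n - m*c + 10*m*n + m^2 + 2*c - 12*n - 5*m + 6) (-2*m*n^2 - 2*m^2*n + 4*n^2 + 11*m*n + 2*m^2 - 14*n - 9*m + 10) (-2*m*n^2 - n*c + n^2 + 6*m*n + c - 3*n - 4*m + 2) = (192*m^2*n^5 + 320*m^3*n^4 + 320*m^4*n^3 + 128*m^5*n^2 - 384*m*n^5 - 1792*m^2*n^4 - 2368*m^3*n^3 - 1312*m^4*n^2 - 128*m^5*n + 2048*m*n^4 + 5968*m^2*n^3 + 4848*m^3*n^2 + 864*m^4*n + 512*n^4 - 3664*m*n^3 - 7376*m^2*n^2 - 1952*m^3*n + 128*m^4 - 2720*n^3 + 1160*m*n^2 + 888*m^2*n - 848*m^3 + 5296*n^2 + 3432*m*n + 2120*m^2 - 4528*n - 2592*m + 1440) + (-32*m*n^4 - 224*m^2*n^3 - 160*m^3*n^2 + 64*n^4 + 704*m*n^3 + 1088*m^2*n^2 + 192*m^3*n - 512*n^3 - 1992*m*n^2 - 968*m^2*n - 32*m^3 + 912*n^2 + 1352*m*n + 104*m^2 - 368*n - 32*m - 96) * c + (2*m*n*c^2 - 4*m*n^2*c - 4*m^2*n*c + 8*m^2*n^2 - 4*n*c^2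 + 8*n^2*c - 2*m*c^2 + 12*m*n*c + 28*m*n^2 + 4*m^2*c + 28*m^2*n + 4*c^2 - 8*n*c - 88*n^2 - 8*m*c - 206*m*n - 36*m^2 + 300*n + 178*m - 212) * (c^2 - TT m n * c + DD m n)"
  unfolding det3_def det4_def TT_def DD_def by Groebner_Basis.algebra

lemma minor4_A: fixes x y :: real assumes "0 \<le> x" "0 \<le> y" shows "0 < (109248 + 231312*x + 185648*y + 174416*x^2 + 364056*x*y + 126568*y^2 + 62656*x^3 + 242760*x^2*y + 226760*x*y^2 + 43840*y^3 + 11072*x^4 + 74944*x^3*y + 127984*x^2*y^2 + 71120*x*y^3 + 7808*y^4 + 768*x^5 + 11232*x^4*y + 31152*x^3*y^2 + 32272*x^2*y^3 + 11456*x*y^4 + 576*y^5 + 640*x^5*y + 3488*x^4*y^2 + 5312*x^3*y^3 + 3968*x^2*y^4 + 768*x*y^5 + 128*x^5*y^2 + 320*x^4*y^3 + 320*x^3*y^4 + 192*x^2*y^5)"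
  using assms by (intro add_pos_nonneg add_nonneg_nonneg mult_nonneg_nonneg zero_le_power) auto

lemma minor4_Ash: fixes m n :: real shows "(192*m^2*n^5 + 320*m^3*n^4 + 320*m^4*n^3 + 128*m^5*n^2 - 384*m*n^5 - 1792*m^2*n^4 - 2368*m^3*n^3 - 1312*m^4*n^2 - 128*m^5*n + 2048*m*n^4 + 5968*m^2*n^3 + 4848*m^3*n^2 + 864*m^4*n + 512*n^4 - 3664*m*n^3 - 7376*m^2*n^2 - 1952*m^3*n + 128*m^4 - 2720*n^3 + 1160*m*n^2 + 888*m^2*n - 848*m^3 + 5296*n^2 + 3432*m*n + 2120*m^2 - 4528*n - 2592*m + 1440) = (109248 + 231312*(m-3) + 185648*(n-3) + 174416*(m-3)^2 + 364056*(m-3)*(n-3) + 126568*(n-3)^2 + 62656*(m-3)^3 + 242760*(m-3)^2*(n-3) + 226760*(m-3)*(n-3)^2 + 43840*(n-3)^3 + 11072*(m-3)^4 + 74944*(m-3)^3*(n-3) + 127984*(m-3)^2*(n-3)^2 + 71120*(m-3)*(n-3)^3 + 7808*(n-3)^4 + 768*(m-3)^5 + 11232*(m-3)^4*(n-3) + 31152*(m-3)^3*(n-3)^2 + 32272*(m-3)^2*(n-3)^3 + 11456*(m-3)*(n-3)^4 + 576*(n-3)^5 + 640*(m-3)^5*(n-3) + 3488*(m-3)^4*(n-3)^2 + 5312*(m-3)^3*(n-3)^3 + 3968*(m-3)^2*(n-3)^4 + 768*(m-3)*(n-3)^5 + 128*(m-3)^5*(n-3)^2 + 320*(m-3)^4*(n-3)^3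 + 320*(m-3)^3*(n-3)^4 + 192*(m-3)^2*(n-3)^5)"
  by Groebner_Basis.algebra

lemma minor4_B: fixes x y :: real assumes "0 \<le> x" "0 \<le> y" shows "0 \<le> (9792 + 16016*x + 12080*y + 7120*x^2 + 18712*x*y + 5064*y^2 + 7400*x^2*y + 7272*x*y^2 + 800*y^3 + 896*x^3 + 2368*x^2*y^2 + 1024*x*y^3 + 768*x^3*y + 32*y^4 + 224*x^2*y^3 + 160*x^3*y^2 + 32*x*y^4)"
  using assms by (intro add_nonneg_nonneg mult_nonneg_nonneg zero_le_power) auto

lemma minor4_Bsh: fixes m n :: real shows "(-32*m*n^4 - 224*m^2*n^3 - 160*m^3*n^2 + 64*n^4 + 704*m*n^3 + 1088*m^2*n^2 + 192*m^3*n - 512*n^3 - 1992*m*n^2 - 968*m^2*n - 32*m^3 + 912*n^2 + 1352*m*n + 104*m^2 - 368*n - 32*m - 96) = - (9792 + 16016*(m-3) + 12080*(n-3) + 7120*(m-3)^2 + 18712*(m-3)*(n-3) + 5064*(n-3)^2 + 7400*(m-3)^2*(n-3) + 7272*(m-3)*(n-3)^2 + 800*(n-3)^3 + 896*(m-3)^3 + 2368*(m-3)^2*(n-3)^2 + 1024*(m-3)*(n-3)^3 + 768*(m-3)^3*(n-3) + 32*(n-3)^4 + 224*(m-3)^2*(n-3)^3 + 160*(m-3)^3*(n-3)^2 + 32*(m-3)*(n-3)^4)"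
  by Groebner_Basis.algebra

lemma QR_eq: fixes m n y0 y1 y3 :: real shows "QW m n 0 y0 y1 (-((m-2)*y0 + 2*y1 + (n-1)*y3)) y3 = Q3 (12*n + 16*m - 50) (4*m*n + 8*m^2 - 8*n - 38*m + 44) (4*m*n - 6*n - 4*m + 6) (2*m^2*n + 4*m^3 - 6*m*n - 25*m^2 + 4*n + 51*m - 34) (2*m^2*n - 5*m*n - 2*m^2 + 2*n + 5*m - 2) (2*m*n^2 - n^2 - 2*m*n + n) y1 y0 y3"
  unfolding QW_def Q4_def Q3_def by Groebner_Basis.algebra

lemma Rminor1_eq: fixes m n :: real shows "(12*n + 16*m - 50) = (34 + 12*(n-3) + 16*(m-3))"
  unfolding det3_def by Groebner_Basis.algebra

lemma Rminor1_pos: fixes x y :: real assumes "0 \<le> x" "0 \<le> y" shows "0 < (34 + 12*y + 16*x)"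
  using assms by (intro add_pos_nonneg add_nonneg_nonneg mult_nonneg_nonneg zero_le_power) auto

lemma Rminor2_eq: fixes m n :: real shows "(12*n + 16*m - 50)*(2*m^2*n + 4*m^3 - 6*m*n - 25*m^2 + 4*n + 51*m - 34) - (4*m*n + 8*m^2 - 8*n - 38*m + 44)^2 = (280 + 526*(m-3) + 192*(n-3) + 304*(m-3)*(n-3) + 32*(n-3)^2 + 302*(m-3)^2 + 40*(m-3)*(n-3)^2 + 128*(m-3)^2*(n-3) + 56*(m-3)^3 + 16*(m-3)^3*(n-3) + 8*(m-3)^2*(n-3)^2)"
  unfolding det3_def by Groebner_Basis.algebra

lemma Rminor2_pos: fixes x y :: real assumes "0 \<le> x" "0 \<le> y" shows "0 < (280 + 526*x + 192*y + 304*x*y + 32*y^2 + 302*x^2 + 40*x*y^2 + 128*x^2*y + 56*x^3 + 16*x^3*y + 8*x^2*y^2)"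
  using assms by (intro add_pos_nonneg add_nonneg_nonneg mult_nonneg_nonneg zero_le_power) auto

lemma Rminor3_eq: fixes m n :: real shows "det3 (12*n + 16*m - 50) (4*m*n + 8*m^2 - 8*n - 38*m + 44) (4*m*n - 6*n - 4*m + 6) (2*m^2*n + 4*m^3 - 6*m*n - 25*m^2 + 4*n + 51*m - 34) (2*m^2*n - 5*m*n - 2*m^2 + 2*n + 5*m - 2) (2*m*n^2 - n^2 - 2*m*n + n) = (6344 + 13668*(m-3) + 9888*(n-3) + 10292*(m-3)^2 + 19854*(m-3)*(n-3) + 5830*(n-3)^2 + 13474*(m-3)^2*(n-3) + 10878*(m-3)*(n-3)^2 + 1556*(n-3)^3 + 3416*(m-3)^3 + 6508*(m-3)^2*(n-3)^2 + 2712*(m-3)*(n-3)^3 + 160*(n-3)^4 + 3972*(m-3)^3*(n-3) + 448*(m-3)^4 + 1412*(m-3)^2*(n-3)^3 + 264*(m-3)*(n-3)^4 + 1612*(m-3)^3*(n-3)^2 + 464*(m-3)^4*(n-3) + 120*(m-3)^2*(n-3)^4 + 272*(m-3)^3*(n-3)^3 + 152*(m-3)^4*(n-3)^2 + 16*(m-3)^4*(n-3)^3 + 16*(m-3)^3*(n-3)^4)"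
  unfolding det3_def by Groebner_Basis.algebra

lemma Rminor3_pos: fixes x y :: real assumes "0 \<le> x" "0 \<le> y" shows "0 < (6344 + 13668*x + 9888*y + 10292*x^2 + 19854*x*y + 5830*y^2 + 13474*x^2*y + 10878*x*y^2 + 1556*y^3 + 3416*x^3 + 6508*x^2*y^2 + 2712*x*y^3 + 160*y^4 + 3972*x^3*y + 448*x^4 + 1412*x^2*y^3 + 264*x*y^4 + 1612*x^3*y^2 + 464*x^4*y + 120*x^2*y^4 + 272*x^3*y^3 + 152*x^4*y^2 + 16*x^4*y^3 + 16*x^3*y^4)"
  using assms by (intro add_pos_nonneg add_nonneg_nonneg mult_nonneg_nonneg zero_le_power) auto

lemma pos_comb: fixes A Bn c :: real assumes "A > 0" "Bn \<ge> 0" "c < 0" shows "0 < A + (- Bn) * c"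
proof -
  have "(- Bn) * c = - (Bn * c)" by simp
  moreover have "Bn * c \<le> 0" using assms(2,3) by (simp add: mult_nonneg_nonpos)
  ultimately show ?thesis using assms(1) by linarith
qed

lemma minor2_pos: fixes m n c :: real
  assumes "m \<ge> 3" "n \<ge> 3" "c < 0" "c^2 - TT m n * c + DD m n = 0"
  shows "0 < (-c)*(-2*c - 4*n + 6) - (-4*n - 4*m + 14)^2"
proof -
  have xy: "0 \<le> m-3" "0 \<le> n-3" using assms by auto
  have e: "(-c)*(-2*c - 4*n + 6) - (-4*n - 4*m + 14)^2 = (582 + 538*(m-3) + 538*(n-3) + 184*(m-3)^2 + 184*(n-3)^2 + 384*(m-3)*(n-3) + 92*(m-3)^2*(n-3) + 92*(m-3)*(n-3)^2 + 24*(m-3)^3 + 24*(n-3)^3 + 8*(m-3)^2*(n-3)^2 + 8*(m-3)^3*(n-3) + 8*(m-3)*(n-3)^3) + (- (34 + 14*(n-3) + 18*(m-3) + 8*(m-3)*(n-3))) * c"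
    using minor2_eq[where m=m and n=n and c=c] unfolding assms(4) minor2_Ash minor2_Bsh by (simp only: mult_zero_right add_0_right)
  show ?thesis unfolding e by (rule pos_comb[OF minor2_A[OF xy] minor2_B[OF xy] assms(3)])
qed

lemma minor3_pos: fixes m n c :: real
  assumes "m \<ge> 3" "n \<ge> 3" "c < 0" "c^2 - TT m n * c + DD m n = 0"
  shows "0 < det3 (-c) (-4*n - 4*m + 14) (-2*m*n - 2*m^2 + 4*n + 9*m - 10) (-2*c - 4*n + 6) (-4*m*n + 8*n + 2*m - 4) (-2*m^2*n - m*c + 10*m*n + m^2 + 2*c - 12*n - 5*m + 6)"
proof -
  have xy: "0 \<le> m-3" "0 \<le> n-3" using assms by auto
  have e: "det3 (-c) (-4*n - 4*m + 14) (-2*m*n - 2*m^2 + 4*n + 9*m - 10) (-2*c - 4*n + 6) (-4*m*n + 8*n + 2*m - 4) (-2*m^2*n - m*c + 10*m*n + m^2 + 2*c - 12*n - 5*m + 6) = (10488 + 22324*(m-3) + 14124*(n-3) + 17180*(m-3)^2 + 28258*(m-3)*(n-3) + 7318*(n-3)^2 + 6496*(m-3)^3 + 19726*(m-3)^2*(n-3) + 13566*(m-3)*(n-3)^2 + 1760*(n-3)^3 + 6648*(m-3)^3*(n-3) + 8196*(m-3)^2*(n-3)^2 + 3020*(m-3)*(n-3)^3 + 1248*(m-3)^4 + 168*(n-3)^4 + 1136*(m-3)^4*(n-3) + 2220*(m-3)^3*(n-3)^2 + 1532*(m-3)^2*(n-3)^3 + 272*(m-3)*(n-3)^4 + 96*(m-3)^5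 + 288*(m-3)^3*(n-3)^3 + 288*(m-3)^4*(n-3)^2 + 120*(m-3)^2*(n-3)^4 + 80*(m-3)^5*(n-3) + 16*(m-3)^4*(n-3)^3 + 16*(m-3)^5*(n-3)^2 + 16*(m-3)^3*(n-3)^4) + (- (1064 + 1844*(m-3) + 988*(n-3) + 972*(m-3)^2 + 1666*(m-3)*(n-3) + 286*(n-3)^2 + 822*(m-3)^2*(n-3) + 454*(m-3)*(n-3)^2 + 208*(m-3)^3 + 24*(n-3)^3 + 192*(m-3)^2*(n-3)^2 + 16*(m-3)^4 + 152*(m-3)^3*(n-3) + 32*(m-3)*(n-3)^3 + 24*(m-3)^3*(n-3)^2 + 8*(m-3)^4*(n-3) + 8*(m-3)^2*(n-3)^3)) * c"
    using minor3_eq[where m=m and n=n and c=c] unfolding assms(4) minor3_Ash minor3_Bsh by (simp only: mult_zero_right add_0_right)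
  show ?thesis unfolding e by (rule pos_comb[OF minor3_A[OF xy] minor3_B[OF xy] assms(3)])
qed

lemma minor4_pos: fixes m n c :: real
  assumes "m \<ge> 3" "n \<ge> 3" "c < 0" "c^2 - TT m n * c + DD m n = 0"
  shows "0 < det4 (-c) (-4*n - 4*m + 14) (-2*m*n - 2*m^2 + 4*n + 9*m - 10) (-2*m*n + n + 2*m - 1) (-2*c - 4*n + 6) (-4*m*n + 8*n + 2*m - 4) (-4*n^2 - 4*m*n + 14*n + 4*m - 10) (-2*m^2*n - m*c + 10*m*n + m^2 + 2*c - 12*n - 5*m + 6) (-2*m*n^2 - 2*m^2*n + 4*n^2 + 11*m*n + 2*m^2 - 14*n - 9*m + 10) (-2*m*n^2 - n*c + n^2 + 6*m*n + c - 3*n - 4*m + 2)"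
proof -
  have xy: "0 \<le> m-3" "0 \<le> n-3" using assms by auto
  have e: "det4 (-c) (-4*n - 4*m + 14) (-2*m*n - 2*m^2 + 4*n + 9*m - 10) (-2*m*n + n + 2*m - 1) (-2*c - 4*n + 6) (-4*m*n + 8*n + 2*m - 4) (-4*n^2 - 4*m*n + 14*n + 4*m - 10) (-2*m^2*n - m*c + 10*m*n + m^2 + 2*c - 12*n - 5*m + 6) (-2*m*n^2 - 2*m^2*n + 4*n^2 + 11*m*n + 2*m^2 - 14*n - 9*m + 10) (-2*m*n^2 - n*c + n^2 + 6*m*n + c - 3*n - 4*m + 2) = (109248 + 231312*(m-3) + 185648*(n-3) + 174416*(m-3)^2 + 364056*(m-3)*(n-3) + 126568*(n-3)^2 + 62656*(m-3)^3 + 242760*(m-3)^2*(n-3) + 226760*(m-3)*(n-3)^2 + 43840*(n-3)^3 + 11072*(m-3)^4 + 74944*(m-3)^3*(n-3) + 127984*(m-3)^2*(n-3)^2 + 71120*(m-3)*(n-3)^3 + 7808*(n-3)^4 + 768*(m-3)^5 + 11232*(m-3)^4*(n-3) + 31152*(m-3)^3*(n-3)^2 + 32272*(m-3)^2*(n-3)^3 + 11456*(m-3)*(n-3)^4 + 576*(n-3)^5 + 640*(m-3)^5*(n-3) + 3488*(m-3)^4*(n-3)^2 + 5312*(m-3)^3*(n-3)^3 + 3968*(m-3)^2*(n-3)^4 + 768*(m-3)*(n-3)^5 + 128*(m-3)^5*(n-3)^2 + 320*(m-3)^4*(n-3)^3 + 320*(m-3)^3*(n-3)^4 + 192*(m-3)^2*(n-3)^5)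 + (- (9792 + 16016*(m-3) + 12080*(n-3) + 7120*(m-3)^2 + 18712*(m-3)*(n-3) + 5064*(n-3)^2 + 7400*(m-3)^2*(n-3) + 7272*(m-3)*(n-3)^2 + 800*(n-3)^3 + 896*(m-3)^3 + 2368*(m-3)^2*(n-3)^2 + 1024*(m-3)*(n-3)^3 + 768*(m-3)^3*(n-3) + 32*(n-3)^4 + 224*(m-3)^2*(n-3)^3 + 160*(m-3)^3*(n-3)^2 + 32*(m-3)*(n-3)^4)) * c"
    using minor4_eq[where m=m and n=n and c=c] unfolding assms(4) minor4_Ash minor4_Bsh by (simp only: mult_zero_right add_0_right)
  show ?thesis unfolding e by (rule pos_comb[OF minor4_A[OF xy] minor4_B[OF xy] assms(3)])
qed

definition cc :: "real \<Rightarrow> real \<Rightarrow> real" where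
  "cc m n = (TT m n - sqrt ((TT m n)^2 - 4 * DD m n)) / 2"

lemma disc_eq: fixes m n :: real shows "(TT m n)^2 - 4 * DD m n = (n-m)^2 + 4*(5-2*m-2*n)^2*m*n"
  unfolding TT_def DD_def by Groebner_Basis.algebra

lemma cc_root: fixes m n :: real assumes "m \<ge> 0" "n \<ge> 0"
  shows "(cc m n)^2 - TT m n * cc m n + DD m n = 0"
proof -
  define s where "s = sqrt ((TT m n)^2 - 4 * DD m n)"
  have "(TT m n)^2 - 4 * DD m n \<ge> 0" unfolding disc_eq using assms by simp
  then have s2: "s^2 = (TT m n)^2 - 4 * DD m n" unfolding s_def by simp
  have e: "((TT m n - s) / 2)^2 - TT m n * ((TT m n - s) / 2) + DD m n = (s^2 - (TT m n)^2 + 4 * DD m n) / 4"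
    by (simp add: power2_eq_square field_simps)
  show ?thesis unfolding cc_def s_def[symmetric] e s2 by simp
qed

lemma cc_neg: fixes m n :: real assumes "m \<ge> 3" "n \<ge> 3" shows "cc m n < 0"
proof -
  have "(1-2*n)*(m-1) < 0" using assms by (intro mult_neg_pos) auto
  moreover have "(1-2*m)*(n-1) < 0" using assms by (intro mult_neg_pos) auto
  ultimately have "TT m n < 0" unfolding TT_def by simp
  moreover have "(TT m n)^2 - 4 * DD m n \<ge> 0" unfolding disc_eq using assms by simp
  then have "sqrt ((TT m n)^2 - 4 * DD m n) \<ge> 0" by simp
  ultimately have "TT m n - sqrt ((TT m n)^2 - 4 * DD m n) < 0" by linarith
  then show ?thesis unfolding cc_def by simp
qed

lemma cc_sym: "cc m n = cc n m"
proof -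
  have "TT m n = TT n m" unfolding TT_def by Groebner_Basis.algebra
  moreover have "DD m n = DD n m" unfolding DD_def by Groebner_Basis.algebra
  ultimately show ?thesis unfolding cc_def by simp
qed

lemma W_pd: fixes m n y0 y1 y2 y3 :: real
  assumes "m \<ge> 3" "n \<ge> 3" "y0 \<noteq> 0 \<or> y1 \<noteq> 0 \<or> y2 \<noteq> 0 \<or> y3 \<noteq> 0"
  shows "QW m n (cc m n) y0 y1 y2 y3 > 0"
proof -
  define c where "c = cc m n"
  have hq: "c^2 - TT m n * c + DD m n = 0" unfolding c_def using cc_root assms by simp
  have cn: "c < 0" unfolding c_def using cc_neg assms by simp
  show ?thesis unfolding QW_def c_def[symmetric]
    apply (rule pd4)
    using cn apply simp
    using minor2_pos[OF assms(1,2) cn hq] apply simp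
    using minor3_pos[OF assms(1,2) cn hq] apply simp
    using minor4_pos[OF assms(1,2) cn hq] apply simp
    using assms(3) by auto
qed

lemma W_psd: fixes m n y0 y1 y2 y3 :: real
  assumes "m \<ge> 3" "n \<ge> 3"
  shows "QW m n (cc m n) y0 y1 y2 y3 \<ge> 0"
proof (cases "y0 \<noteq> 0 \<or> y1 \<noteq> 0 \<or> y2 \<noteq> 0 \<or> y3 \<noteq> 0")
  case True then show ?thesis using W_pd[OF assms True] by simp
next
  case False then show ?thesis unfolding QW_def Q4_def by simp
qed

lemma R_psd: fixes m n y0 y1 y3 :: real
  assumes "m \<ge> 3" "n \<ge> 3"
  shows "QW m n 0 y0 y1 (-((m-2)*y0 + 2*y1 + (n-1)*y3)) y3 \<ge> 0"
proof -
  have xy: "0 \<le> m-3" "0 \<le> n-3" using assms by auto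
  show ?thesis
  proof (cases "y1 \<noteq> 0 \<or> y0 \<noteq> 0 \<or> y3 \<noteq> 0")
    case True
    show ?thesis unfolding QR_eq
      apply (rule less_imp_le, rule pd3)
      apply (subst Rminor1_eq, rule Rminor1_pos[OF xy])
      apply (subst Rminor2_eq, rule Rminor2_pos[OF xy])
      apply (subst Rminor3_eq, rule Rminor3_pos[OF xy])
      using True by auto
  next
    case False then show ?thesis unfolding QR_eq Q3_def by simp
  qed
qed

definition Fm :: "real \<Rightarrow> real \<Rightarrow> real \<Rightarrow> real \<Rightarrow> real \<Rightarrow> real \<Rightarrow> real \<Rightarrow> real \<Rightarrow> real \<Rightarrow> real \<Rightarrow> real" where
  "Fm m n s0 s1 s2 s3 t0 t1 t2 t3 = (1-2*n)*((s0+s1)^2 - t0 - t1) + (1-2*m)*((s2+s3)^2 - t2 - t3)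
     + 2*(5-2*m-2*n)*(s0+s1)*(s2+s3) + 2*((s1+s2)^2 - t1 - t2)"

lemma Fm_sym: "Fm m n s0 s1 s2 s3 t0 t1 t2 t3 = Fm n m s3 s2 s1 s0 t3 t2 t1 t0"
  unfolding Fm_def by Groebner_Basis.algebra

lemma Fm_QW: fixes m n c y0 y1 y2 y3 e0 e1 e2 e3 :: real
  shows "Fm m n ((m-2)*y0) (2*y1) y2 ((n-1)*y3) ((m-2)*y0^2 + e0) (2*y1^2 + e1) (y2^2 + e2) ((n-1)*y3^2 + e3)
   - c * (((m-2)*y0^2 + e0) + (2*y1^2 + e1) + (y2^2 + e2) + ((n-1)*y3^2 + e3))
   = QW m n c y0 y1 y2 y3 + (2*n-1-c)*e0 + (2*n-3-c)*e1 + (2*m-3-c)*e2 + (2*m-1-c)*e3"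
  unfolding Fm_def QW_def Q4_def by Groebner_Basis.algebra

lemma NumL1: fixes m n s0 s1 s2 s3 t0 t1 t2 t3 :: real
  assumes mn: "m \<ge> 3" "n \<ge> 3"
    and h: "s0^2 \<le> (m-2)*t0" "s1^2 \<le> 2*t1" "s2^2 \<le> t2" "s3^2 \<le> (n-1)*t3"
    and tp: "t0 + t1 + t2 + t3 > 0"
  shows "Fm m n s0 s1 s2 s3 t0 t1 t2 t3 > cc m n * (t0 + t1 + t2 + t3)"
proof -
  define c where "c = cc m n"
  have cn: "c < 0" unfolding c_def using cc_neg mn by simp
  define y0 where "y0 = s0/(m-2)"
  define y1 where "y1 = s1/2"
  define y2 where "y2 = s2"
  define y3 where "y3 = s3/(n-1)"
  have p0: "m - 2 > 0" and p3: "n - 1 > 0" using mn by auto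
  have s0e: "s0 = (m-2)*y0" unfolding y0_def using p0 by simp
  have s1e: "s1 = 2*y1" unfolding y1_def by simp
  have s3e: "s3 = (n-1)*y3" unfolding y3_def using p3 by simp
  define e0 where "e0 = t0 - (m-2)*y0^2"
  define e1 where "e1 = t1 - 2*y1^2"
  define e2 where "e2 = t2 - y2^2"
  define e3 where "e3 = t3 - (n-1)*y3^2"
  have e0p: "e0 \<ge> 0"
  proof -
    have "(m-2)*((m-2)*y0^2) \<le> (m-2)*t0" using h(1) unfolding s0e by (simp add: power2_eq_square algebra_simps)
    then have "(m-2)*y0^2 \<le> t0" using p0 by simp
    then show ?thesis unfolding e0_def by simp
  qed
  have e1p: "e1 \<ge> 0" using h(2) unfolding e1_def s1e by (simp add: power2_eq_square)
  have e2p: "e2 \<ge> 0" using h(3) unfolding e2_def y2_def by simp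
  have e3p: "e3 \<ge> 0"
  proof -
    have "(n-1)*((n-1)*y3^2) \<le> (n-1)*t3" using h(4) unfolding s3e by (simp add: power2_eq_square algebra_simps)
    then have "(n-1)*y3^2 \<le> t3" using p3 by simp
    then show ?thesis unfolding e3_def by simp
  qed
  have t: "t0 = (m-2)*y0^2 + e0" "t1 = 2*y1^2 + e1" "t2 = y2^2 + e2" "t3 = (n-1)*y3^2 + e3"
    unfolding e0_def e1_def e2_def e3_def by simp_all
  have key: "Fm m n s0 s1 s2 s3 t0 t1 t2 t3 - c * (t0 + t1 + t2 + t3)
     = QW m n c y0 y1 y2 y3 + (2*n-1-c)*e0 + (2*n-3-c)*e1 + (2*m-3-c)*e2 + (2*m-1-c)*e3"
    unfolding s0e s1e s3e y2_def[symmetric] t by (rule Fm_QW)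
  have k0: "(2*n-1-c)*e0 \<ge> 0" "(2*n-3-c)*e1 \<ge> 0" "(2*m-3-c)*e2 \<ge> 0" "(2*m-1-c)*e3 \<ge> 0"
    using mn cn e0p e1p e2p e3p by simp_all
  have "QW m n c y0 y1 y2 y3 + (2*n-1-c)*e0 + (2*n-3-c)*e1 + (2*m-3-c)*e2 + (2*m-1-c)*e3 > 0"
  proof (cases "e0 = 0 \<and> e1 = 0 \<and> e2 = 0 \<and> e3 = 0")
    case True
    have "y0 \<noteq> 0 \<or> y1 \<noteq> 0 \<or> y2 \<noteq> 0 \<or> y3 \<noteq> 0"
    proof (rule ccontr)
      assume "\<not> ?thesis"
      then have "t0 + t1 + t2 + t3 = 0" unfolding t using True by simp
      then show False using tp by simp
    qed
    then have "QW m n c y0 y1 y2 y3 > 0" unfolding c_def by (rule W_pd[OF mn])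
    then show ?thesis using True by simp
  next
    case False
    have q: "QW m n c y0 y1 y2 y3 \<ge> 0" unfolding c_def by (rule W_psd[OF mn])
    have "(2*n-1-c)*e0 > 0 \<or> (2*n-3-c)*e1 > 0 \<or> (2*m-3-c)*e2 > 0 \<or> (2*m-1-c)*e3 > 0"
      using False e0p e1p e2p e3p mn cn by (auto intro!: mult_pos_pos)
    then show ?thesis using q k0 by linarith
  qed
  then show ?thesis using key unfolding c_def by linarith
qed

lemma NumL2: fixes m n s0 s1 s2 s3 t0 t1 t2 t3 :: real
  assumes mn: "m \<ge> 3" "n \<ge> 3"
    and h: "s0^2 \<le> (m-2)*t0" "s1^2 \<le> 2*t1" "s2^2 \<le> t2" "s3^2 \<le> (n-1)*t3"
    and sz: "s0 + s1 + s2 + s3 = 0"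
  shows "Fm m n s0 s1 s2 s3 t0 t1 t2 t3 \<ge> 0"
proof -
  define y0 where "y0 = s0/(m-2)"
  define y1 where "y1 = s1/2"
  define y2 where "y2 = s2"
  define y3 where "y3 = s3/(n-1)"
  have p0: "m - 2 > 0" and p3: "n - 1 > 0" using mn by auto
  have s0e: "s0 = (m-2)*y0" unfolding y0_def using p0 by simp
  have s1e: "s1 = 2*y1" unfolding y1_def by simp
  have s3e: "s3 = (n-1)*y3" unfolding y3_def using p3 by simp
  define e0 where "e0 = t0 - (m-2)*y0^2"
  define e1 where "e1 = t1 - 2*y1^2"
  define e2 where "e2 = t2 - y2^2"
  define e3 where "e3 = t3 - (n-1)*y3^2"
  have e0p: "e0 \<ge> 0"
  proof -
    have "(m-2)*((m-2)*y0^2) \<le> (m-2)*t0" using h(1) unfolding s0e by (simp add: power2_eq_square algebra_simps)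
    then have "(m-2)*y0^2 \<le> t0" using p0 by simp
    then show ?thesis unfolding e0_def by simp
  qed
  have e1p: "e1 \<ge> 0" using h(2) unfolding e1_def s1e by (simp add: power2_eq_square)
  have e2p: "e2 \<ge> 0" using h(3) unfolding e2_def y2_def by simp
  have e3p: "e3 \<ge> 0"
  proof -
    have "(n-1)*((n-1)*y3^2) \<le> (n-1)*t3" using h(4) unfolding s3e by (simp add: power2_eq_square algebra_simps)
    then have "(n-1)*y3^2 \<le> t3" using p3 by simp
    then show ?thesis unfolding e3_def by simp
  qed
  have t: "t0 = (m-2)*y0^2 + e0" "t1 = 2*y1^2 + e1" "t2 = y2^2 + e2" "t3 = (n-1)*y3^2 + e3"
    unfolding e0_def e1_def e2_def e3_def by simp_all
  have key: "Fm m n s0 s1 s2 s3 t0 t1 t2 t3 - 0 * (t0 + t1 + t2 + t3)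
     = QW m n 0 y0 y1 y2 y3 + (2*n-1-0)*e0 + (2*n-3-0)*e1 + (2*m-3-0)*e2 + (2*m-1-0)*e3"
    unfolding s0e s1e s3e y2_def[symmetric] t by (rule Fm_QW)
  have y2e: "y2 = -((m-2)*y0 + 2*y1 + (n-1)*y3)" using sz unfolding y2_def s0e s1e s3e by linarith
  have "QW m n 0 y0 y1 y2 y3 \<ge> 0" unfolding y2e by (rule R_psd[OF mn])
  moreover have "(2*n-1-0)*e0 \<ge> 0" "(2*n-3-0)*e1 \<ge> 0" "(2*m-3-0)*e2 \<ge> 0" "(2*m-1-0)*e3 \<ge> 0"
    using mn e0p e1p e2p e3p by simp_all
  ultimately show ?thesis using key by linarith
qed

lemma ev_eq1: fixes m n c :: real
  shows "(m-1)*(1-2*n)*((5-2*m-2*n)*n) + n*(5-2*m-2*n)*(c - (m-1)*(1-2*n)) = c*((5-2*m-2*n)*n)"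
  by Groebner_Basis.algebra

lemma ev_eq2: fixes m n c :: real assumes "c^2 - TT m n * c + DD m n = 0"
  shows "m*(5-2*m-2*n)*((5-2*m-2*n)*n) + (n-1)*(1-2*m)*(c - (m-1)*(1-2*n)) = c*(c - (m-1)*(1-2*n))"
proof -
  have "m*(5-2*m-2*n)*((5-2*m-2*n)*n) + (n-1)*(1-2*m)*(c - (m-1)*(1-2*n)) - c*(c - (m-1)*(1-2*n))
      = - (c^2 - TT m n * c + DD m n)" unfolding TT_def DD_def by Groebner_Basis.algebra
  then show ?thesis using assms by simp
qed


definition Qf :: "nat \<Rightarrow> real mat \<Rightarrow> (nat \<Rightarrow> real) \<Rightarrow> real" where
  "Qf N A x = (\<Sum>i<N. \<Sum>j<N. A $$ (i,j) * x i * x j)"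

lemma form_eq:
  fixes A :: "real mat" and z :: "nat \<Rightarrow> complex"
  assumes sym: "\<And>i j. i<N \<Longrightarrow> j<N \<Longrightarrow> A$$(i,j) = A$$(j,i)"
  shows "(\<Sum>i<N. cnj (z i) * (\<Sum>j<N. complex_of_real (A$$(i,j)) * z j))
       = complex_of_real (Qf N A (\<lambda>i. Re (z i)) + Qf N A (\<lambda>i. Im (z i)))"
proof -
  have e: "(\<Sum>i<N. cnj (z i) * (\<Sum>j<N. complex_of_real (A$$(i,j)) * z j))
     = (\<Sum>i<N. \<Sum>j<N. cnj (z i) * complex_of_real (A$$(i,j)) * z j)"
    by (simp add: sum_distrib_left mult.assoc)
  have t: "cnj (z i) * complex_of_real r * z j =
     Complex (r * (Re (z i) * Re (z j)) + r * (Im (z i) * Im (z j)))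
             (r * (Re (z i) * Im (z j)) - r * (Im (z i) * Re (z j)))" for i j r
    by (simp add: complex_eq_iff algebra_simps)
  have sw: "(\<Sum>i<N. \<Sum>j<N. A$$(i,j) * (Re (z i) * Im (z j))) = (\<Sum>i<N. \<Sum>j<N. A$$(i,j) * (Im (z i) * Re (z j)))"
    apply (subst sum.swap)
    by (intro sum.cong refl, simp add: sym mult.commute)
  show ?thesis unfolding e
  proof (rule complex_eqI)
    show "Re (\<Sum>i<N. \<Sum>j<N. cnj (z i) * complex_of_real (A$$(i,j)) * z j) =
      Re (complex_of_real (Qf N A (\<lambda>i. Re (z i)) + Qf N A (\<lambda>i. Im (z i))))"
      unfolding t Re_sum Qf_def by (simp add: sum.distrib mult.assoc)
    show "Im (\<Sum>i<N. \<Sum>j<N. cnj (z i) * complex_of_real (A$$(i,j)) * z j) =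
      Im (complex_of_real (Qf N A (\<lambda>i. Re (z i)) + Qf N A (\<lambda>i. Im (z i))))"
      unfolding t Im_sum using sw by (simp add: sum_subtractf)
  qed
qed

context
  fixes N :: nat and A :: "real mat"
  assumes carr: "A \<in> carrier_mat N N"
  and sym: "\<And>i j. i<N \<Longrightarrow> j<N \<Longrightarrow> A$$(i,j) = A$$(j,i)"
begin

abbreviation "MC \<equiv> map_mat complex_of_real A"

lemma MC_carr: "MC \<in> carrier_mat N N" using carr by auto

lemma mv: assumes "v \<in> carrier_vec N" "i < N"
  shows "(MC *\<^sub>v v) $ i = (\<Sum>j<N. complex_of_real (A$$(i,j)) * v$j)"
  using assms carr by (auto simp: scalar_prod_def lessThan_atLeast0 intro!: sum.cong)

lemma root_eigen: assumes "\<mu> \<in># proots (char_poly MC)"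
  shows "\<exists>v. v \<in> carrier_vec N \<and> v \<noteq> 0\<^sub>v N \<and> MC *\<^sub>v v = \<mu> \<cdot>\<^sub>v v"
proof -
  have cp0: "char_poly MC \<noteq> 0"
    using degree_monic_char_poly[OF MC_carr] by auto
  have "poly (char_poly MC) \<mu> = 0" using assms cp0 by simp
  then have "eigenvalue MC \<mu>" using eigenvalue_root_char_poly[OF MC_carr] by simp
  then show ?thesis unfolding eigenvalue_def eigenvector_def using carr by auto
qed

lemma root_real: assumes "\<mu> \<in># proots (char_poly MC)"
  shows "\<exists>a b. (\<exists>i<N. a i \<noteq> 0 \<or> b i \<noteq> 0) \<and>
     \<mu> * complex_of_real (\<Sum>i<N. (a i)^2 + (b i)^2) = complex_of_real (Qf N A a + Qf N A b)"
proof -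
  obtain v where v: "v \<in> carrier_vec N" "v \<noteq> 0\<^sub>v N" "MC *\<^sub>v v = \<mu> \<cdot>\<^sub>v v"
    using root_eigen[OF assms] by blast
  define z where "z i = v $ i" for i
  have nz: "\<exists>i<N. z i \<noteq> 0" using v(1,2) unfolding z_def by (auto simp: vec_eq_iff)
  have "(\<Sum>i<N. cnj (z i) * (\<Sum>j<N. complex_of_real (A$$(i,j)) * z j))
       = (\<Sum>i<N. cnj (z i) * (\<mu> * z i))"
    apply (intro sum.cong refl)
    subgoal for i using mv[OF v(1), of i] v(1,3) unfolding z_def by auto
    done
  also have "\<dots> = (\<Sum>i<N. \<mu> * complex_of_real ((Re (z i))^2 + (Im (z i))^2))"
  proof (intro sum.cong refl)
    fix i
    have "cnj (z i) * (\<mu> * z i) = \<mu> * (z i * cnj (z i))" by (simp add: ac_simps)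
    then show "cnj (z i) * (\<mu> * z i) = \<mu> * complex_of_real ((Re (z i))^2 + (Im (z i))^2)"
      by (simp only: complex_mult_cnj)
  qed
  also have "\<dots> = \<mu> * complex_of_real (\<Sum>i<N. (Re (z i))^2 + (Im (z i))^2)"
    by (simp only: sum_distrib_left of_real_sum)
  finally have "\<mu> * complex_of_real (\<Sum>i<N. (Re (z i))^2 + (Im (z i))^2) =
     complex_of_real (Qf N A (\<lambda>i. Re (z i)) + Qf N A (\<lambda>i. Im (z i)))"
    using form_eq[of N A z] sym by simp
  moreover have "\<exists>i<N. Re (z i) \<noteq> 0 \<or> Im (z i) \<noteq> 0" using nz by (auto simp: complex_eq_iff)
  ultimately show ?thesis
    by (intro exI[of _ "\<lambda>i. Re (z i)"] exI[of _ "\<lambda>i. Im (z i)"] conjI)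
qed


lemma root_is_real: assumes "\<mu> \<in># proots (char_poly MC)"
  shows "\<mu> = complex_of_real (Re \<mu>)"
proof -
  obtain a b where nz: "\<exists>i<N. a i \<noteq> 0 \<or> b i \<noteq> 0" and
    e: "\<mu> * complex_of_real (\<Sum>i<N. (a i)^2 + (b i)^2) = complex_of_real (Qf N A a + Qf N A b)"
    using root_real[OF assms] by blast
  have pos: "(\<Sum>i<N. (a i)^2 + (b i)^2) > 0"
  proof -
    obtain i where i: "i<N" "a i \<noteq> 0 \<or> b i \<noteq> 0" using nz by blast
    have "(a i)^2 + (b i)^2 > 0" using i(2) by (auto simp: add_pos_nonneg add_nonneg_pos)
    moreover have "(a i)^2 + (b i)^2 \<le> (\<Sum>i<N. (a i)^2 + (b i)^2)"
      using i(1) by (intro member_le_sum) auto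
    ultimately show ?thesis by linarith
  qed
  from e have "\<mu> = complex_of_real (Qf N A a + Qf N A b) / complex_of_real (\<Sum>i<N. (a i)^2 + (b i)^2)"
    using pos by (simp only: eq_divide_eq of_real_eq_0_iff) simp
  then have "\<mu> = complex_of_real ((Qf N A a + Qf N A b) / (\<Sum>i<N. (a i)^2 + (b i)^2))"
    by (simp only: of_real_divide)
  then show ?thesis by simp
qed

lemma root_gt: assumes "\<mu> \<in># proots (char_poly MC)"
  and C1: "\<And>x. (\<exists>i<N. x i \<noteq> 0) \<Longrightarrow> Qf N A x > c * (\<Sum>i<N. (x i)^2)"
  shows "Re \<mu> > c"
proof -
  obtain a b where nz: "\<exists>i<N. a i \<noteq> 0 \<or> b i \<noteq> 0" and
    e: "\<mu> * complex_of_real (\<Sum>i<N. (a i)^2 + (b i)^2) = complex_of_real (Qf N A a + Qf N A b)"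
    using root_real[OF assms(1)] by blast
  have ge: "Qf N A x \<ge> c * (\<Sum>i<N. (x i)^2)" for x
  proof (cases "\<exists>i<N. x i \<noteq> 0")
    case True then show ?thesis using C1[OF True] by simp
  next
    case False then show ?thesis by (simp add: Qf_def)
  qed
  have "c * (\<Sum>i<N. (a i)^2 + (b i)^2) = c * (\<Sum>i<N. (a i)^2) + c * (\<Sum>i<N. (b i)^2)"
    by (simp add: sum.distrib algebra_simps)
  also have "\<dots> < Qf N A a + Qf N A b"
  proof (cases "\<exists>i<N. a i \<noteq> 0")
    case True then show ?thesis using C1[OF True] ge[of b] by simp
  next
    case False then have "\<exists>i<N. b i \<noteq> 0" using nz by auto
    then show ?thesis using C1[of b] ge[of a] by simp
  qed
  finally have lt: "c * (\<Sum>i<N. (a i)^2 + (b i)^2) < Qf N A a + Qf N A b" .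
  have "Re \<mu> * (\<Sum>i<N. (a i)^2 + (b i)^2) = Qf N A a + Qf N A b"
    using arg_cong[OF e, of Re] by simp
  with lt have "c * (\<Sum>i<N. (a i)^2 + (b i)^2) < Re \<mu> * (\<Sum>i<N. (a i)^2 + (b i)^2)" by simp
  moreover have "(\<Sum>i<N. (a i)^2 + (b i)^2) \<ge> 0" by (intro sum_nonneg) auto
  ultimately show ?thesis by (rule mult_right_less_imp_less)
qed

lemma cp_factor: "\<exists>es. char_poly MC = (\<Prod>a\<leftarrow>es. [:- a, 1:]) \<and> length es = N \<and>
   mset es = proots (char_poly MC)"
proof -
  obtain es where es: "char_poly MC = (\<Prod>a\<leftarrow>es. [:- a, 1:])" "length es = N"
    using char_poly_factorized[OF MC_carr] by blast
  have "proots (\<Prod>a\<leftarrow>es. [:- a, 1:]) = mset es"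
  proof (induction es)
    case Nil then show ?case by simp
  next
    case (Cons a es)
    have "proots ([:- a, 1:] * (\<Prod>a\<leftarrow>es. [:- a, 1:])) = proots [:- a, 1:] + proots (\<Prod>a\<leftarrow>es. [:- a, 1:])"
      by (rule proots_mult) (auto simp: prod_list_zero_iff)
    also have "proots [:- a, 1:] = {#a#}" using proots_linear_factor[of "-a"] by simp
    finally show ?case using Cons by simp
  qed
  with es show ?thesis by auto
qed

lemma mult_idx: assumes "X \<in> carrier_mat n k" "Y \<in> carrier_mat k m" "i < n" "j < m"
  shows "(X * Y) $$ (i,j) = (\<Sum>l<k. X$$(i,l) * Y$$(l,j))"
  using assms by (auto simp: scalar_prod_def lessThan_atLeast0 intro!: sum.cong)

lemma trace_zero: assumes diag0: "\<And>i. i<N \<Longrightarrow> A$$(i,i) = 0"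
  shows "sum_mset (proots (char_poly MC)) = 0"
proof -
  obtain es where es: "char_poly MC = (\<Prod>a\<leftarrow>es. [:- a, 1:])" "length es = N"
     "mset es = proots (char_poly MC)"
    using cp_factor by blast
  obtain B P Q where sd: "schur_decomposition MC es = (B,P,Q)" by (cases "schur_decomposition MC es")
  from schur_decomposition[OF MC_carr es(1) sd]
  have w: "similar_mat_wit MC B P Q" and dB: "diag_mat B = es" by auto
  from w have cB: "B \<in> carrier_mat N N" and cP: "P \<in> carrier_mat N N" and cQ: "Q \<in> carrier_mat N N"
    and QP: "Q * P = 1\<^sub>m N" and M: "MC = P * B * Q"
    unfolding similar_mat_wit_def Let_def using carr by auto
  have cPB: "P * B \<in> carrier_mat N N" using cP cB by auto
  have "0 = (\<Sum>i<N. MC $$ (i,i))" using diag0 carr by simp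
  also have "\<dots> = (\<Sum>i<N. \<Sum>k<N. (\<Sum>j<N. P$$(i,j) * B$$(j,k)) * Q$$(k,i))"
    apply (intro sum.cong refl)
    subgoal for i
      unfolding M mult_idx[OF cPB cQ, of i i, simplified]
      apply (subst mult_idx[OF cPB cQ], simp, simp)
      apply (intro sum.cong refl)
      apply (subst mult_idx[OF cP cB], auto)
      done
    done
  also have "\<dots> = (\<Sum>i<N. \<Sum>k<N. \<Sum>j<N. P$$(i,j) * B$$(j,k) * Q$$(k,i))"
    by (simp add: sum_distrib_right)
  also have "\<dots> = (\<Sum>i<N. \<Sum>j<N. \<Sum>k<N. P$$(i,j) * B$$(j,k) * Q$$(k,i))"
    by (rule sum.cong[OF refl], rule sum.swap)
  also have "\<dots> = (\<Sum>j<N. \<Sum>i<N. \<Sum>k<N. P$$(i,j) * B$$(j,k) * Q$$(k,i))"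
    by (rule sum.swap)
  also have "\<dots> = (\<Sum>j<N. \<Sum>k<N. \<Sum>i<N. P$$(i,j) * B$$(j,k) * Q$$(k,i))"
    by (rule sum.cong[OF refl], rule sum.swap)
  also have "\<dots> = (\<Sum>j<N. \<Sum>k<N. B$$(j,k) * (\<Sum>i<N. Q$$(k,i) * P$$(i,j)))"
    by (intro sum.cong refl) (simp add: sum_distrib_left mult.commute mult.left_commute)
  also have "\<dots> = (\<Sum>j<N. \<Sum>k<N. B$$(j,k) * (Q * P)$$(k,j))"
    by (intro sum.cong refl, subst mult_idx[OF cQ cP], auto)
  also have "\<dots> = (\<Sum>j<N. B$$(j,j))"
    unfolding QP by (intro sum.cong refl) (simp add: if_distrib sum.delta cong: if_cong)
  also have "\<dots> = sum_list (diag_mat B)"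
    using cB by (simp add: diag_mat_def sum_list_sum_nth lessThan_atLeast0)
  also have "\<dots> = sum_mset (proots (char_poly MC))"
    using dB es(3) by (metis sum_mset_sum_list)
  finally show ?thesis by simp
qed


lemma sum_col_upper:
  fixes B :: "complex mat"
  assumes ut: "\<And>l. l < N \<Longrightarrow> j < l \<Longrightarrow> B$$(l,j) = 0" and j: "j < N"
  shows "(\<Sum>l<N. f l * B$$(l,j)) = (\<Sum>l<Suc j. f l * B$$(l,j))"
  by (rule sum.mono_neutral_right) (use ut j in auto)

definition Mv :: "nat \<Rightarrow> real mat \<Rightarrow> (nat \<Rightarrow> complex) \<Rightarrow> nat \<Rightarrow> complex" where
  "Mv n X f k = (\<Sum>i<n. complex_of_real (X$$(k,i)) * f i)"

lemma Mv_lin: "Mv N A (\<lambda>k. a * f k + b * g k) k = a * Mv N A f k + b * Mv N A g k"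
  by (simp add: Mv_def sum.distrib sum_distrib_left algebra_simps)

lemma herm: "(\<Sum>k<N. cnj (z k) * Mv N A w k) = (\<Sum>k<N. cnj (Mv N A z k) * w k)"
proof -
  have "(\<Sum>k<N. cnj (z k) * Mv N A w k) = (\<Sum>k<N. \<Sum>i<N. cnj (z k) * complex_of_real (A$$(k,i)) * w i)"
    by (simp add: Mv_def sum_distrib_left mult.assoc)
  also have "\<dots> = (\<Sum>i<N. \<Sum>k<N. cnj (z k) * complex_of_real (A$$(k,i)) * w i)"
    by (rule sum.swap)
  also have "\<dots> = (\<Sum>i<N. cnj (Mv N A z i) * w i)"
    unfolding Mv_def
    by (intro sum.cong refl) (simp add: cnj_sum sum_distrib_left sym ac_simps)
  finally show ?thesis .
qed

lemma one_neg:
  assumes C2: "\<And>x. (\<Sum>i<N. x i) = 0 \<Longrightarrow> Qf N A x \<ge> 0"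
  shows "size (filter_mset (\<lambda>r. Re r < 0) (proots (char_poly MC))) \<le> 1"
proof (rule ccontr)
  define R where "R = proots (char_poly MC)"
  define F where "F = filter_mset (\<lambda>r. Re r < 0) R"
  assume "\<not> size (filter_mset (\<lambda>r. Re r < 0) (proots (char_poly MC))) \<le> 1"
  then have sF: "size F \<ge> 2" unfolding F_def R_def by simp
  then have "F \<noteq> {#}" by auto
  then obtain r1 where r1: "r1 \<in># F" by (meson multiset_nonemptyE)
  have "size (F - {#r1#}) \<ge> 1" using sF r1 by (simp add: size_Diff_submset)
  then have "F - {#r1#} \<noteq> {#}" by auto
  then obtain r2 where r2: "r2 \<in># F - {#r1#}" by (meson multiset_nonemptyE)
  have sub: "{#r1, r2#} \<subseteq># F"
    using r1 r2 by (simp add: insert_subset_eq_iff)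
  have FR: "F \<subseteq># R" unfolding F_def by simp
  obtain xs where xs: "mset xs = R - {#r1, r2#}" using ex_mset by blast
  define es where "es = r1 # r2 # xs"
  have subR: "{#r1, r2#} \<subseteq># R" using sub FR by (rule subset_mset.order_trans)
  have mes: "mset es = R"
  proof -
    have "mset es = {#r1, r2#} + (R - {#r1, r2#})" unfolding es_def using xs by simp
    also have "\<dots> = R" using subR by (rule subset_mset.add_diff_inverse)
    finally show ?thesis .
  qed
  obtain as where as: "char_poly MC = (\<Prod>a\<leftarrow>as. [:- a, 1:])" "length as = N" "mset as = R"
    using cp_factor unfolding R_def by blast
  have cpes: "char_poly MC = (\<Prod>a\<leftarrow>es. [:- a, 1:])"
  proof -
    have "(\<Prod>a\<leftarrow>es. [:- a, 1:]) = prod_mset (image_mset (\<lambda>a. [:- a, 1:]) (mset es))"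
      by (simp add: prod_mset_prod_list[symmetric])
    also have "\<dots> = (\<Prod>a\<leftarrow>as. [:- a, 1:])"
      using mes as(3) by (simp add: prod_mset_prod_list[symmetric])
    finally show ?thesis using as(1) by simp
  qed
  have lN: "length es = N" using mes as(2,3) by (metis size_mset)
  then have N2: "N \<ge> 2" unfolding es_def by simp
  obtain B P Q where sd: "schur_decomposition MC es = (B,P,Q)" by (cases "schur_decomposition MC es")
  from schur_decomposition[OF MC_carr cpes sd]
  have w: "similar_mat_wit MC B P Q" and ut: "upper_triangular B" and dB: "diag_mat B = es" by auto
  from w have cB: "B \<in> carrier_mat N N" and cP: "P \<in> carrier_mat N N" and cQ: "Q \<in> carrier_mat N N"
    and QP: "Q * P = 1\<^sub>m N" and M: "MC = P * B * Q"
    unfolding similar_mat_wit_def Let_def using carr by auto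
  have B00: "B$$(0,0) = r1" and B11: "B$$(1,1) = r2"
    using dB cB N2 unfolding diag_mat_def es_def by (auto simp: list_eq_iff_nth_eq)
  have utB: "\<And>l j. l < N \<Longrightarrow> j < l \<Longrightarrow> B$$(l,j) = 0" using ut cB unfolding upper_triangular_def by auto
  have MP: "MC * P = P * B"
  proof -
    have "MC * P = (P * B) * (Q * P)" unfolding M using cP cB cQ
      by (metis assoc_mult_mat mult_carrier_mat)
    also have "\<dots> = P * B" unfolding QP using cP cB by simp
    finally show ?thesis .
  qed
  define p0 where "p0 k = P$$(k,0)" for k
  define p1 where "p1 k = P$$(k,1)" for k
  define b01 where "b01 = B$$(0,1)"
  have Mp0: "Mv N A p0 k = r1 * p0 k" if k: "k < N" for k
  proof -
    have "Mv N A p0 k = (MC * P)$$(k,0)"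
      using k N2 carr cP unfolding Mv_def p0_def by (subst mult_idx[OF MC_carr cP]) auto
    also have "\<dots> = (\<Sum>l<N. P$$(k,l) * B$$(l,0))" unfolding MP using k N2 by (subst mult_idx[OF cP cB]) auto
    also have "\<dots> = (\<Sum>l<Suc 0. P$$(k,l) * B$$(l,0))" using sum_col_upper[of 0 B] utB N2 by auto
    finally show ?thesis unfolding p0_def using B00 by simp
  qed
  have Mp1: "Mv N A p1 k = b01 * p0 k + r2 * p1 k" if k: "k < N" for k
  proof -
    have "Mv N A p1 k = (MC * P)$$(k,1)"
      using k N2 carr cP unfolding Mv_def p1_def by (subst mult_idx[OF MC_carr cP]) auto
    also have "\<dots> = (\<Sum>l<N. P$$(k,l) * B$$(l,1))" unfolding MP using k N2 by (subst mult_idx[OF cP cB]) auto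
    also have "\<dots> = (\<Sum>l<Suc 1. P$$(k,l) * B$$(l,1))" using sum_col_upper[of 1 B] utB N2 by auto
    finally show ?thesis unfolding p0_def p1_def b01_def using B11 by (simp add: numeral_2_eq_2 ac_simps)
  qed
  define s0 where "s0 = (\<Sum>k<N. p0 k)"
  define s1 where "s1 = (\<Sum>k<N. p1 k)"
  define \<alpha> where "\<alpha> = (if s0 = 0 \<and> s1 = 0 then 1 else s1)"
  define \<beta> where "\<beta> = (if s0 = 0 \<and> s1 = 0 then 0 else - s0)"
  have ab: "\<alpha> \<noteq> 0 \<or> \<beta> \<noteq> 0" unfolding \<alpha>_def \<beta>_def by auto
  define z where "z k = \<alpha> * p0 k + \<beta> * p1 k" for k
  have sz: "(\<Sum>k<N. z k) = 0"
    unfolding z_def by (simp add: sum.distrib sum_distrib_left[symmetric] s0_def[symmetric] s1_def[symmetric])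
      (simp add: \<alpha>_def \<beta>_def)
  have Qz: "(\<Sum>k<N. Q$$(j,k) * z k) = (if j = 0 then \<alpha> else if j = 1 then \<beta> else 0)" if j: "j < N" for j
  proof -
    have "(\<Sum>k<N. Q$$(j,k) * z k) = \<alpha> * (Q*P)$$(j,0) + \<beta> * (Q*P)$$(j,1)"
      unfolding z_def using j N2
      by (simp add: mult_idx[OF cQ cP] sum.distrib sum_distrib_left p0_def p1_def algebra_simps)
    then show ?thesis unfolding QP using j N2 by auto
  qed
  have znz: "\<exists>k<N. z k \<noteq> 0"
  proof (rule ccontr)
    assume "\<not> (\<exists>k<N. z k \<noteq> 0)"
    then have "\<And>j. (\<Sum>k<N. Q$$(j,k) * z k) = 0" by simp
    then show False using Qz[of 0] Qz[of 1] N2 ab by auto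
  qed
  define w where "w k = Mv N A z k" for k
  have wz: "w k = (\<alpha> * r1 + \<beta> * b01) * p0 k + (\<beta> * r2) * p1 k" if "k < N" for k
    unfolding w_def z_def Mv_lin using Mp0[OF that] Mp1[OF that] by (simp add: algebra_simps)
  have Mw: "Mv N A w k = (r1 + r2) * w k - r1 * r2 * z k" if "k < N" for k
  proof -
    have "Mv N A w k = Mv N A (\<lambda>k. (\<alpha> * r1 + \<beta> * b01) * p0 k + (\<beta> * r2) * p1 k) k"
      unfolding Mv_def using wz by (intro sum.cong refl) auto
    also have "\<dots> = (\<alpha> * r1 + \<beta> * b01) * (r1 * p0 k) + (\<beta> * r2) * (b01 * p0 k + r2 * p1 k)"
      unfolding Mv_lin using Mp0[OF that] Mp1[OF that] by simp
    finally show ?thesis using wz[OF that] unfolding z_def by (simp add: algebra_simps)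
  qed
  have r1R: "r1 \<in># R" and r2R: "r2 \<in># R" using r1 r2 FR
    by (auto dest: in_diffD mset_subset_eqD)
  have r1n: "Re r1 < 0" and r2n: "Re r2 < 0" using r1 r2 unfolding F_def by (auto dest: in_diffD)
  define t1 where "t1 = Re r1"
  define t2 where "t2 = Re r2"
  have r1e: "r1 = complex_of_real t1" using root_is_real r1R unfolding R_def t1_def by blast
  have r2e: "r2 = complex_of_real t2" using root_is_real r2R unfolding R_def t2_def by blast
  define a where "a i = Re (z i)" for i
  define b where "b i = Im (z i)" for i
  have q: "(\<Sum>k<N. cnj (z k) * w k) = complex_of_real (Qf N A a + Qf N A b)"
    unfolding w_def Mv_def a_def b_def by (rule form_eq) (use sym in auto)
  define nz where "nz = (\<Sum>k<N. (Re (z k))^2 + (Im (z k))^2)"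
  have zz: "(\<Sum>k<N. cnj (z k) * z k) = complex_of_real nz"
    unfolding nz_def of_real_sum
    by (intro sum.cong refl) (metis complex_mult_cnj mult.commute)
  define W where "W = (\<Sum>k<N. (Re (w k))^2 + (Im (w k))^2)"
  have ww: "(\<Sum>k<N. cnj (w k) * w k) = complex_of_real W"
    unfolding W_def of_real_sum
    by (intro sum.cong refl) (metis complex_mult_cnj mult.commute)
  have "(\<Sum>k<N. cnj (z k) * Mv N A w k) = (\<Sum>k<N. cnj (z k) * ((r1 + r2) * w k - r1 * r2 * z k))"
    using Mw by (intro sum.cong refl) auto
  also have "\<dots> = (r1 + r2) * (\<Sum>k<N. cnj (z k) * w k) - r1 * r2 * (\<Sum>k<N. cnj (z k) * z k)"
    by (simp add: sum_distrib_left sum_subtractf algebra_simps)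
  finally have e1: "(\<Sum>k<N. cnj (w k) * w k) = (r1 + r2) * (\<Sum>k<N. cnj (z k) * w k) - r1 * r2 * (\<Sum>k<N. cnj (z k) * z k)"
    unfolding herm w_def .
  have "complex_of_real W = complex_of_real ((t1 + t2) * (Qf N A a + Qf N A b) - t1 * t2 * nz)"
    using e1 unfolding ww q zz r1e r2e by simp
  then have We: "W = (t1 + t2) * (Qf N A a + Qf N A b) - t1 * t2 * nz" by (simp only: of_real_eq_iff)
  have W0: "W \<ge> 0" unfolding W_def by (intro sum_nonneg) auto
  have nzp: "nz > 0"
  proof -
    obtain k where k: "k<N" "z k \<noteq> 0" using znz by blast
    have "(Re (z k))^2 + (Im (z k))^2 > 0" using k(2) by (auto simp: complex_eq_iff add_pos_nonneg add_nonneg_pos)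
    moreover have "(Re (z k))^2 + (Im (z k))^2 \<le> nz"
      unfolding nz_def using k(1) by (intro member_le_sum) auto
    ultimately show ?thesis by linarith
  qed
  have "(\<Sum>i<N. a i) = 0" unfolding a_def using arg_cong[OF sz, of Re] by (simp add: Re_sum)
  then have qa: "Qf N A a \<ge> 0" by (rule C2)
  have "(\<Sum>i<N. b i) = 0" unfolding b_def using arg_cong[OF sz, of Im] by (simp add: Im_sum)
  then have qb: "Qf N A b \<ge> 0" by (rule C2)
  have t12: "t1 < 0" "t2 < 0" using r1n r2n unfolding t1_def t2_def by auto
  have "(t1 + t2) * (Qf N A a + Qf N A b) \<le> 0"
    using t12 qa qb by (intro mult_nonpos_nonneg) auto
  moreover have "t1 * t2 * nz > 0" using t12 nzp by (simp add: mult_pos_pos mult_neg_neg)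
  ultimately show False using We W0 by linarith
qed


lemma energy_form: assumes diag0: "\<And>i. i<N \<Longrightarrow> A$$(i,i) = 0"
  shows "sum_mset (image_mset cmod (proots (char_poly MC))) =
         2 * sum_mset (image_mset (\<lambda>r. max 0 (- Re r)) (proots (char_poly MC)))"
proof -
  define R where "R = proots (char_poly MC)"
  have re: "\<And>r. r \<in># R \<Longrightarrow> cmod r = Re r + 2 * max 0 (- Re r)"
  proof -
    fix r assume "r \<in># R"
    then have "r = complex_of_real (Re r)" using root_is_real unfolding R_def by blast
    then have "cmod r = \<bar>Re r\<bar>" by (metis norm_of_real)
    then show "cmod r = Re r + 2 * max 0 (- Re r)" by auto
  qed
  have "sum_mset (image_mset cmod R) = sum_mset (image_mset (\<lambda>r. Re r + 2 * max 0 (- Re r)) R)"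
    using re by (intro arg_cong[where f = sum_mset] image_mset_cong) auto
  also have "\<dots> = sum_mset (image_mset Re R) + 2 * sum_mset (image_mset (\<lambda>r. max 0 (- Re r)) R)"
    by (induction R) (auto simp: algebra_simps)
  also have "sum_mset (image_mset Re R) = Re (sum_mset R)" by (induction R) auto
  also have "sum_mset R = 0" using trace_zero[OF diag0] unfolding R_def .
  finally show ?thesis unfolding R_def by simp
qed

lemma sum_mset_nonneg': "(\<And>x. f x \<ge> (0::real)) \<Longrightarrow> sum_mset (image_mset f M) \<ge> 0"
  by (induction M) (auto intro: add_nonneg_nonneg)

lemma energy_lower:
  assumes diag0: "\<And>i. i<N \<Longrightarrow> A$$(i,i) = 0"
  and x: "\<exists>i<N. x i \<noteq> 0" and ev: "\<And>i. i<N \<Longrightarrow> (\<Sum>j<N. A$$(i,j) * x j) = c * x i"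
  and c: "c < 0"
  shows "sum_mset (image_mset cmod (proots (char_poly MC))) \<ge> - 2 * c"
proof -
  define R where "R = proots (char_poly MC)"
  define v where "v = vec N (\<lambda>i. complex_of_real (x i))"
  have v: "v \<in> carrier_vec N" unfolding v_def by simp
  have "v \<noteq> 0\<^sub>v N" using x unfolding v_def by (auto simp: vec_eq_iff)
  moreover have "MC *\<^sub>v v = complex_of_real c \<cdot>\<^sub>v v"
  proof (rule eq_vecI)
    fix i assume "i < dim_vec (complex_of_real c \<cdot>\<^sub>v v)"
    then have i: "i < N" using v by simp
    have "(MC *\<^sub>v v) $ i = (\<Sum>j<N. complex_of_real (A$$(i,j)) * v $ j)" by (rule mv[OF v i])
    also have "\<dots> = (\<Sum>j<N. complex_of_real (A$$(i,j)) * complex_of_real (x j))"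
      unfolding v_def by (intro sum.cong refl) auto
    also have "\<dots> = complex_of_real (\<Sum>j<N. A$$(i,j) * x j)" by simp
    also have "\<dots> = complex_of_real c * complex_of_real (x i)" using ev[OF i] by simp
    finally show "(MC *\<^sub>v v) $ i = (complex_of_real c \<cdot>\<^sub>v v) $ i" using i unfolding v_def by simp
  qed (use v carr in auto)
  ultimately have "eigenvalue MC (complex_of_real c)" unfolding eigenvalue_def eigenvector_def
    using carr v by auto
  then have "poly (char_poly MC) (complex_of_real c) = 0" using eigenvalue_root_char_poly[OF MC_carr] by simp
  moreover have "char_poly MC \<noteq> 0" using degree_monic_char_poly[OF MC_carr] by auto
  ultimately have cR: "complex_of_real c \<in># R" unfolding R_def by simp
  define f where "f r = max 0 (- Re r)" for r :: complex
  have "sum_mset (image_mset f R) = f (complex_of_real c) + sum_mset (image_mset f (R - {#complex_of_real c#}))"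
    using cR by (metis image_mset_add_mset insert_DiffM sum_mset.insert)
  moreover have "sum_mset (image_mset f (R - {#complex_of_real c#})) \<ge> 0"
    by (rule sum_mset_nonneg') (auto simp: f_def)
  moreover have "f (complex_of_real c) = - c" using c unfolding f_def by simp
  ultimately have "sum_mset (image_mset f R) \<ge> - c" by linarith
  moreover have "sum_mset (image_mset cmod R) = 2 * sum_mset (image_mset f R)"
    using energy_form[OF diag0] unfolding R_def f_def .
  ultimately show ?thesis unfolding R_def by linarith
qed

lemma energy_upper:
  assumes diag0: "\<And>i. i<N \<Longrightarrow> A$$(i,i) = 0"
  and C1: "\<And>x. (\<exists>i<N. x i \<noteq> 0) \<Longrightarrow> Qf N A x > c * (\<Sum>i<N. (x i)^2)"
  and C2: "\<And>x. (\<Sum>i<N. x i) = 0 \<Longrightarrow> Qf N A x \<ge> 0"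
  and c: "c < 0"
  shows "sum_mset (image_mset cmod (proots (char_poly MC))) < - 2 * c"
proof -
  define R where "R = proots (char_poly MC)"
  define f where "f r = max 0 (- Re r)" for r :: complex
  define F where "F = filter_mset (\<lambda>r. Re r < 0) R"
  have "sum_mset (image_mset f R) = sum_mset (image_mset f F) + sum_mset (image_mset f (filter_mset (\<lambda>r. \<not> Re r < 0) R))"
    unfolding F_def by (metis image_mset_union multiset_partition sum_mset.union)
  also have "sum_mset (image_mset f (filter_mset (\<lambda>r. \<not> Re r < 0) R)) = 0"
    by (rule sum_mset.neutral) (auto simp: f_def)
  finally have sF: "sum_mset (image_mset f R) = sum_mset (image_mset f F)" by simp
  have szF: "size F \<le> 1" using one_neg[OF C2] unfolding F_def R_def by simp
  have "sum_mset (image_mset f F) < - c"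
  proof (cases "size F = 0")
    case True then show ?thesis using c by simp
  next
    case False
    then have "size F = 1" using szF by linarith
    then obtain r where Fr: "F = {#r#}" by (metis size_1_singleton_mset)
    then have "r \<in># R" unfolding F_def by (metis count_filter_mset count_single in_countE
        not_in_iff zero_neq_one multiset_filter_subset mset_subset_eqD union_single_eq_member)
    then have "Re r > c" using root_gt C1 unfolding R_def by blast
    moreover have "Re r < 0" using Fr unfolding F_def by (metis filter_mset_eq_conv union_single_eq_member)
    ultimately show ?thesis using Fr unfolding f_def by simp
  qed
  moreover have "sum_mset (image_mset cmod R) = 2 * sum_mset (image_mset f R)"
    using energy_form[OF diag0] unfolding R_def f_def .
  ultimately show ?thesis using sF unfolding R_def by linarith
qed

end


lemma E_mem: "f \<in> complete_bip3_edges m n \<longleftrightarrow>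
   f \<subseteq> {0..<m+n} \<and> card f = 3 \<and> f \<inter> {0..<m} \<noteq> {} \<and> f \<inter> {m..<m+n} \<noteq> {}"
  by (simp only: complete_bip3_edges_def mem_Collect_eq)

lemma finite_E: "finite (complete_bip3_edges m n)"
proof -
  have "complete_bip3_edges m n \<subseteq> Pow {0..<m+n}"
  proof
    fix f assume "f \<in> complete_bip3_edges m n"
    then have "f \<subseteq> {0..<m+n}" unfolding E_mem by blast
    then show "f \<in> Pow {0..<m+n}" by simp
  qed
  then show ?thesis by (rule finite_subset) simp
qed

lemma codeg_count:
  assumes i: "i < m+n" and j: "j < m+n" and ij: "i \<noteq> j"
  shows "codegree (complete_bip3_edges m n) i j =
    card {k. k < m+n \<and> k \<noteq> i \<and> k \<noteq> j \<and> (i<m \<or> j<m \<or> k<m) \<and> (m\<le>i \<or> m\<le>j \<or> m\<le>k)}"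
proof -
  define K where "K = {k. k < m+n \<and> k \<noteq> i \<and> k \<noteq> j \<and> (i<m \<or> j<m \<or> k<m) \<and> (m\<le>i \<or> m\<le>j \<or> m\<le>k)}"
  define F where "F = {f \<in> complete_bip3_edges m n. i \<in> f \<and> j \<in> f}"
  have inj: "inj_on (\<lambda>k. {i,j,k}) K"
  proof (rule inj_onI)
    fix k k' assume "k \<in> K" "k' \<in> K" "{i,j,k} = {i,j,k'}"
    then have "k \<in> {i,j,k'}" "k \<noteq> i" "k \<noteq> j" unfolding K_def by auto
    then show "k = k'" by auto
  qed
  have img: "(\<lambda>k. {i,j,k}) ` K = F"
  proof
    show "(\<lambda>k. {i,j,k}) ` K \<subseteq> F"
    proof
      fix f assume "f \<in> (\<lambda>k. {i,j,k}) ` K"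
      then obtain k where k: "k \<in> K" "f = {i,j,k}" by blast
      have "card {i,j,k} = 3" using k(1) ij unfolding K_def by auto
      moreover have "{i,j,k} \<subseteq> {0..<m+n}" using k(1) i j unfolding K_def by auto
      moreover have "{i,j,k} \<inter> {0..<m} \<noteq> {}" using k(1) unfolding K_def by auto
      moreover have "{i,j,k} \<inter> {m..<m+n} \<noteq> {}" using k(1) i j unfolding K_def by auto
      ultimately show "f \<in> F" unfolding F_def E_mem k(2) by auto
    qed
  next
    show "F \<subseteq> (\<lambda>k. {i,j,k}) ` K"
    proof
      fix f assume f: "f \<in> F"
      then have fE: "f \<subseteq> {0..<m+n}" "card f = 3" "f \<inter> {0..<m} \<noteq> {}" "f \<inter> {m..<m+n} \<noteq> {}"
        and ijf: "i \<in> f" "j \<in> f" unfolding F_def E_mem by auto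
      have fin: "finite f" using fE(1) by (rule finite_subset) simp
      have "card (f - {i,j}) = 1" using fE(2) ijf ij fin by (simp add: card_Diff_subset)
      then obtain k where k: "f - {i,j} = {k}" by (rule card_1_singletonE)
      have fk: "f = {i,j,k}" using k ijf by auto
      have "k \<in> K" using fE fk k i j unfolding K_def by auto
      then show "f \<in> (\<lambda>k. {i,j,k}) ` K" using fk by blast
    qed
  qed
  have "card F = card K" using inj img by (metis card_image)
  then show ?thesis unfolding codegree_def F_def K_def by simp
qed

lemma codeg_val:
  assumes i: "i < m+n" and j: "j < m+n" and ij: "i \<noteq> j"
  shows "codegree (complete_bip3_edges m n) i j =
    (if i < m \<and> j < m then n else if m \<le> i \<and> m \<le> j then m else m + n - 2)"
proof -
  define K where "K = {k. k < m+n \<and> k \<noteq> i \<and> k \<noteq> j \<and> (i<m \<or> j<m \<or> k<m) \<and> (m\<le>i \<or> m\<le>j \<or> m\<le>k)}"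
  have c: "codegree (complete_bip3_edges m n) i j = card K" unfolding K_def by (rule codeg_count[OF assms])
  show ?thesis
  proof (cases "i < m \<and> j < m")
    case True
    then have "K = {m..<m+n}" unfolding K_def by auto
    then show ?thesis using c True by simp
  next
    case F1: False
    show ?thesis
    proof (cases "m \<le> i \<and> m \<le> j")
      case True
      then have "K = {..<m}" unfolding K_def using i j by auto
      then show ?thesis using c True F1 by simp
    next
      case False
      then have "K = {..<m+n} - {i,j}" unfolding K_def using F1 i j by auto
      then have "card K = m + n - 2" using i j ij by (simp add: card_Diff_subset)
      then show ?thesis unfolding if_not_P[OF F1] if_not_P[OF False] using c by simp
    qed
  qed
qed

lemma codeg_minus:
  assumes e: "e \<in> complete_bip3_edges m n"
  shows "codegree (complete_bip3_edges m n - {e}) i j =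
     codegree (complete_bip3_edges m n) i j - (if i \<in> e \<and> j \<in> e then 1 else 0)"
proof -
  have "{f \<in> complete_bip3_edges m n - {e}. i \<in> f \<and> j \<in> f} = {f \<in> complete_bip3_edges m n. i \<in> f \<and> j \<in> f} - {e}"
    by auto
  moreover have "finite {f \<in> complete_bip3_edges m n. i \<in> f \<and> j \<in> f}" using finite_E by simp
  ultimately show ?thesis unfolding codegree_def using e by (auto simp: card_Diff_singleton_if)
qed


definition kap :: "nat \<Rightarrow> nat \<Rightarrow> nat \<Rightarrow> nat \<Rightarrow> real" where
  "kap m n i j = (if i < m \<and> j < m then 1 - 2*real n else if m \<le> i \<and> m \<le> j then 1 - 2*real m
     else 5 - 2*real m - 2*real n)"

lemma S_entry: assumes "i < m+n" "j < m+n"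
  shows "seidel_matrix (m+n) (complete_bip3_edges m n) $$ (i,j) = (if i = j then 0 else kap m n i j)"
proof (cases "i = j")
  case True then show ?thesis using assms by (simp add: seidel_matrix_def)
next
  case False
  have "1 - 2 * real (codegree (complete_bip3_edges m n) i j) = kap m n i j"
  proof (cases "i < m \<and> j < m")
    case True then show ?thesis using codeg_val[OF assms False] by (simp add: kap_def)
  next
    case F1: False
    show ?thesis
    proof (cases "m \<le> i \<and> m \<le> j")
      case True then show ?thesis using codeg_val[OF assms False] F1 by (simp add: kap_def)
    next
      case F2: False
      have mn2: "m + n \<ge> 2" using assms F1 F2 by auto
      have "codegree (complete_bip3_edges m n) i j = m + n - 2"
        using codeg_val[OF assms False] F1 F2 by presburger
      have kv: "kap m n i j = 5 - 2*real m - 2*real n"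
        unfolding kap_def if_not_P[OF F1] if_not_P[OF F2] by simp
      have "real (codegree (complete_bip3_edges m n) i j) = real m + real n - 2"
        using \<open>codegree (complete_bip3_edges m n) i j = m + n - 2\<close> mn2 by (simp add: of_nat_diff)
      then show ?thesis using kv by simp
    qed
  qed
  then show ?thesis using assms False by (simp add: seidel_matrix_def)
qed

lemma codeg_pos: assumes e: "e \<in> complete_bip3_edges m n" and "i \<in> e" "j \<in> e"
  shows "codegree (complete_bip3_edges m n) i j \<ge> 1"
proof -
  have "finite {f \<in> complete_bip3_edges m n. i \<in> f \<and> j \<in> f}" using finite_E by simp
  moreover have "e \<in> {f \<in> complete_bip3_edges m n. i \<in> f \<and> j \<in> f}" using assms by simp
  ultimately show ?thesis unfolding codegree_def by (metis One_nat_def Suc_leI card_gt_0_iff empty_iff)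
qed

lemma Sp_entry: assumes "i < m+n" "j < m+n" and e: "e \<in> complete_bip3_edges m n"
  shows "seidel_matrix (m+n) (complete_bip3_edges m n - {e}) $$ (i,j) =
    (if i = j then 0 else kap m n i j + (if i \<in> e \<and> j \<in> e then 2 else 0))"
proof (cases "i = j")
  case True then show ?thesis using assms by (simp add: seidel_matrix_def)
next
  case False
  have k: "1 - 2 * real (codegree (complete_bip3_edges m n) i j) = kap m n i j"
    using S_entry[OF assms(1,2)] False assms by (simp add: seidel_matrix_def)
  have "1 - 2 * real (codegree (complete_bip3_edges m n - {e}) i j) =
     kap m n i j + (if i \<in> e \<and> j \<in> e then 2 else 0)"
  proof (cases "i \<in> e \<and> j \<in> e")
    case True
    then have "codegree (complete_bip3_edges m n) i j \<ge> 1" using codeg_pos e by blast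
    then have "real (codegree (complete_bip3_edges m n - {e}) i j) = real (codegree (complete_bip3_edges m n) i j) - 1"
      using codeg_minus[OF e, of i j] True by (simp add: of_nat_diff)
    then show ?thesis using True k by simp
  next
    case False
    have "codegree (complete_bip3_edges m n - {e}) i j = codegree (complete_bip3_edges m n) i j"
      using codeg_minus[OF e, of i j] unfolding if_not_P[OF False] by simp
    then show ?thesis unfolding if_not_P[OF False] using k by simp
  qed
  then show ?thesis using assms False by (simp add: seidel_matrix_def)
qed

lemma cs_sum: fixes f :: "nat \<Rightarrow> real" assumes "finite A"
  shows "(\<Sum>i\<in>A. f i)^2 \<le> real (card A) * (\<Sum>i\<in>A. (f i)^2)"
proof -
  have "0 \<le> (\<Sum>i\<in>A. \<Sum>j\<in>A. (f i - f j)^2)" by (intro sum_nonneg) auto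
  also have "\<dots> = (\<Sum>i\<in>A. \<Sum>j\<in>A. (f i)^2 + (f j)^2 - 2 * (f i * f j))"
    by (intro sum.cong refl) (simp add: power2_eq_square algebra_simps)
  also have "\<dots> = (\<Sum>i\<in>A. \<Sum>j\<in>A. (f i)^2) + (\<Sum>i\<in>A. \<Sum>j\<in>A. (f j)^2) - 2 * (\<Sum>i\<in>A. \<Sum>j\<in>A. f i * f j)"
    by (simp only: sum.distrib sum_subtractf sum_distrib_left)
  also have "(\<Sum>i\<in>A. \<Sum>j\<in>A. (f i)^2) = real (card A) * (\<Sum>i\<in>A. (f i)^2)"
    by (simp add: sum_distrib_left)
  also have "(\<Sum>i\<in>A. \<Sum>j\<in>A. (f j)^2) = real (card A) * (\<Sum>i\<in>A. (f i)^2)"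
    by simp
  also have "(\<Sum>i\<in>A. \<Sum>j\<in>A. f i * f j) = (\<Sum>i\<in>A. f i)^2"
    by (simp add: power2_eq_square sum_product)
  finally show ?thesis by simp
qed

lemma split_sum: fixes f :: "nat \<Rightarrow> 'a::comm_monoid_add" and m n :: nat
  shows "(\<Sum>j<m+n. f j) = (\<Sum>j<m. f j) + (\<Sum>j\<in>{m..<m+n}. f j)"
proof -
  have "(\<Sum>j<m+n. f j) = (\<Sum>j\<in>{0..<m+n}. f j)" by (simp add: lessThan_atLeast0)
  also have "\<dots> = (\<Sum>j\<in>{0..<m}. f j) + (\<Sum>j\<in>{m..<m+n}. f j)"
    by (rule sum.atLeastLessThan_concat[symmetric]) auto
  finally show ?thesis by (simp add: lessThan_atLeast0)
qed

lemma bilin: fixes M :: "nat \<Rightarrow> nat \<Rightarrow> real" and u :: "nat \<Rightarrow> nat \<Rightarrow> real"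
  shows "(\<Sum>i<N. \<Sum>j<N. (\<Sum>K<4. \<Sum>L<4. M K L * u K i * u L j) * x i * x j) =
    (\<Sum>K<4. \<Sum>L<4. M K L * (\<Sum>i<N. u K i * x i) * (\<Sum>j<N. u L j * x j))"
proof -
  have "(\<Sum>i<N. \<Sum>j<N. (\<Sum>K<4. \<Sum>L<4. M K L * u K i * u L j) * x i * x j)
      = (\<Sum>i<N. \<Sum>j<N. \<Sum>K<4. \<Sum>L<4. M K L * (u K i * x i) * (u L j * x j))"
    by (intro sum.cong refl) (simp add: sum_distrib_left sum_distrib_right mult.commute mult.left_commute mult.assoc)
  also have "\<dots> = (\<Sum>i<N. \<Sum>K<4. \<Sum>j<N. \<Sum>L<4. M K L * (u K i * x i) * (u L j * x j))"
    by (rule sum.cong[OF refl], rule sum.swap)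
  also have "\<dots> = (\<Sum>K<4. \<Sum>i<N. \<Sum>j<N. \<Sum>L<4. M K L * (u K i * x i) * (u L j * x j))"
    by (rule sum.swap)
  also have "\<dots> = (\<Sum>K<4. \<Sum>i<N. \<Sum>L<4. \<Sum>j<N. M K L * (u K i * x i) * (u L j * x j))"
    by (rule sum.cong[OF refl], rule sum.cong[OF refl], rule sum.swap)
  also have "\<dots> = (\<Sum>K<4. \<Sum>L<4. \<Sum>i<N. \<Sum>j<N. M K L * (u K i * x i) * (u L j * x j))"
    by (rule sum.cong[OF refl], rule sum.swap)
  also have "\<dots> = (\<Sum>K<4. \<Sum>L<4. M K L * (\<Sum>i<N. u K i * x i) * (\<Sum>j<N. u L j * x j))"
    by (intro sum.cong refl) (simp add: sum_distrib_left sum_distrib_right ac_simps)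
  finally show ?thesis .
qed


definition ind :: "nat \<Rightarrow> nat set \<Rightarrow> nat \<Rightarrow> nat \<Rightarrow> real" where
  "ind m e K i = (if K = 0 then (if i < m \<and> i \<notin> e then 1 else 0)
     else if K = 1 then (if i < m \<and> i \<in> e then 1 else 0)
     else if K = 2 then (if m \<le> i \<and> i \<in> e then 1 else 0)
     else (if m \<le> i \<and> i \<notin> e then 1 else 0))"

definition Mc :: "real \<Rightarrow> real \<Rightarrow> nat \<Rightarrow> nat \<Rightarrow> real" where
  "Mc m n K L = (if K \<le> 1 \<and> L \<le> 1 then 1 - 2*n else if 2 \<le> K \<and> 2 \<le> L then 1 - 2*m else 5 - 2*m - 2*n)
      + (if (K = 1 \<or> K = 2) \<and> (L = 1 \<or> L = 2) then 2 else 0)"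

lemma sum4: fixes f :: "nat \<Rightarrow> real" shows "(\<Sum>K<4. f K) = f 0 + f 1 + f 2 + f 3"
  by (simp add: eval_nat_numeral)

lemma g_decomp: "kap m n i j + (if i \<in> e \<and> j \<in> e then 2 else 0) =
   (\<Sum>K<4. \<Sum>L<4. Mc (real m) (real n) K L * ind m e K i * ind m e L j)"
  unfolding sum4
  by (cases "i < m"; cases "i \<in> e"; cases "j < m"; cases "j \<in> e") (simp_all add: Mc_def ind_def kap_def)

lemma diag_decomp: "kap m n i i + (if i \<in> e \<and> i \<in> e then 2 else 0) =
   (1 - 2*real n) * (ind m e 0 i + ind m e 1 i) + (1 - 2*real m) * (ind m e 2 i + ind m e 3 i)
   + 2 * (ind m e 1 i + ind m e 2 i)"
  by (cases "i < m"; cases "i \<in> e") (simp_all add: ind_def kap_def)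

lemma ind_sum: "ind m e 0 i + ind m e 1 i + ind m e 2 i + ind m e 3 i = 1"
  by (cases "i < m"; cases "i \<in> e") (simp_all add: ind_def)

definition sig :: "nat \<Rightarrow> nat \<Rightarrow> nat set \<Rightarrow> (nat \<Rightarrow> real) \<Rightarrow> nat \<Rightarrow> real" where
  "sig m n e x K = (\<Sum>i<m+n. ind m e K i * x i)"

definition tau :: "nat \<Rightarrow> nat \<Rightarrow> nat set \<Rightarrow> (nat \<Rightarrow> real) \<Rightarrow> nat \<Rightarrow> real" where
  "tau m n e x K = (\<Sum>i<m+n. ind m e K i * (x i)^2)"

lemma Qf_Fm: assumes e: "e \<in> complete_bip3_edges m n"
  shows "Qf (m+n) (seidel_matrix (m+n) (complete_bip3_edges m n - {e})) x =
    Fm (real m) (real n) (sig m n e x 0) (sig m n e x 1) (sig m n e x 2) (sig m n e x 3)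
       (tau m n e x 0) (tau m n e x 1) (tau m n e x 2) (tau m n e x 3)"
proof -
  define N where "N = m + n"
  define g where "g i j = kap m n i j + (if i \<in> e \<and> j \<in> e then 2 else 0)" for i j
  have "Qf N (seidel_matrix N (complete_bip3_edges m n - {e})) x =
     (\<Sum>i<N. \<Sum>j<N. (if i = j then 0 else g i j) * x i * x j)"
    unfolding Qf_def N_def g_def using Sp_entry[OF _ _ e] by (intro sum.cong refl) simp
  also have "\<dots> = (\<Sum>i<N. (\<Sum>j<N. g i j * x i * x j) - g i i * (x i)^2)"
  proof (intro sum.cong refl)
    fix i assume i: "i \<in> {..<N}"
    have "(\<Sum>j<N. (if i = j then 0 else g i j) * x i * x j) =
       (\<Sum>j<N. g i j * x i * x j - (if i = j then g i i * (x i)^2 else 0))"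
      by (intro sum.cong refl) (auto simp: power2_eq_square)
    also have "\<dots> = (\<Sum>j<N. g i j * x i * x j) - g i i * (x i)^2"
      using i by (simp add: sum_subtractf)
    finally show "(\<Sum>j<N. (if i = j then 0 else g i j) * x i * x j) = (\<Sum>j<N. g i j * x i * x j) - g i i * (x i)^2" .
  qed
  also have "\<dots> = (\<Sum>i<N. \<Sum>j<N. g i j * x i * x j) - (\<Sum>i<N. g i i * (x i)^2)"
    by (simp add: sum_subtractf)
  also have "(\<Sum>i<N. \<Sum>j<N. g i j * x i * x j) =
     (\<Sum>i<N. \<Sum>j<N. (\<Sum>K<4. \<Sum>L<4. Mc (real m) (real n) K L * ind m e K i * ind m e L j) * x i * x j)"
    unfolding g_def g_decomp ..
  also have "\<dots> = (\<Sum>K<4. \<Sum>L<4. Mc (real m) (real n) K L * sig m n e x K * sig m n e x L)"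
    unfolding bilin sig_def N_def ..
  also have "(\<Sum>i<N. g i i * (x i)^2) = (1 - 2*real n) * (tau m n e x 0 + tau m n e x 1)
      + (1 - 2*real m) * (tau m n e x 2 + tau m n e x 3) + 2 * (tau m n e x 1 + tau m n e x 2)"
  proof -
    have "(\<Sum>i<N. g i i * (x i)^2) = (\<Sum>i<N. (1 - 2*real n) * (ind m e 0 i * (x i)^2) + (1 - 2*real n) * (ind m e 1 i * (x i)^2)
       + (1 - 2*real m) * (ind m e 2 i * (x i)^2) + (1 - 2*real m) * (ind m e 3 i * (x i)^2)
       + 2 * (ind m e 1 i * (x i)^2) + 2 * (ind m e 2 i * (x i)^2))"
      unfolding g_def diag_decomp by (intro sum.cong refl) (simp add: algebra_simps)
    also have "\<dots> = (1 - 2*real n) * tau m n e x 0 + (1 - 2*real n) * tau m n e x 1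
       + (1 - 2*real m) * tau m n e x 2 + (1 - 2*real m) * tau m n e x 3
       + 2 * tau m n e x 1 + 2 * tau m n e x 2"
      unfolding tau_def N_def by (simp only: sum.distrib sum_distrib_left[symmetric])
    finally show ?thesis by (simp add: algebra_simps)
  qed
  finally show ?thesis unfolding N_def sum4 Fm_def by (simp add: Mc_def power2_eq_square algebra_simps)
qed


definition Cset :: "nat \<Rightarrow> nat \<Rightarrow> nat set \<Rightarrow> nat \<Rightarrow> nat set" where
  "Cset m n e K = {i \<in> {..<m+n}. ind m e K i = 1}"

lemma sig_set: "sig m n e x K = (\<Sum>i\<in>Cset m n e K. x i)"
proof -
  have "sig m n e x K = (\<Sum>i<m+n. if ind m e K i = 1 then x i else 0)"
    unfolding sig_def by (intro sum.cong refl) (auto simp: ind_def)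
  then show ?thesis unfolding Cset_def using sum.inter_filter[of "{..<m+n}" x "\<lambda>i. ind m e K i = 1"] by simp
qed

lemma tau_set: "tau m n e x K = (\<Sum>i\<in>Cset m n e K. (x i)^2)"
proof -
  have "tau m n e x K = (\<Sum>i<m+n. if ind m e K i = 1 then (x i)^2 else 0)"
    unfolding tau_def by (intro sum.cong refl) (auto simp: ind_def)
  then show ?thesis unfolding Cset_def using sum.inter_filter[of "{..<m+n}" "\<lambda>i. (x i)^2" "\<lambda>i. ind m e K i = 1"] by simp
qed

lemma cs_K: "(sig m n e x K)^2 \<le> real (card (Cset m n e K)) * tau m n e x K"
  unfolding sig_set tau_set by (rule cs_sum) (simp add: Cset_def)

lemma sum_sig: "(\<Sum>i<m+n. x i) = sig m n e x 0 + sig m n e x 1 + sig m n e x 2 + sig m n e x 3"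
proof -
  have "(\<Sum>i<m+n. x i) = (\<Sum>i<m+n. ind m e 0 i * x i + ind m e 1 i * x i + ind m e 2 i * x i + ind m e 3 i * x i)"
    by (intro sum.cong refl) (metis ind_sum distrib_right mult_1)
  then show ?thesis unfolding sig_def by (simp add: sum.distrib)
qed

lemma sum_tau: "(\<Sum>i<m+n. (x i)^2) = tau m n e x 0 + tau m n e x 1 + tau m n e x 2 + tau m n e x 3"
proof -
  have "(\<Sum>i<m+n. (x i)^2) = (\<Sum>i<m+n. ind m e 0 i * (x i)^2 + ind m e 1 i * (x i)^2 + ind m e 2 i * (x i)^2 + ind m e 3 i * (x i)^2)"
    by (intro sum.cong refl) (metis ind_sum distrib_right mult_1)
  then show ?thesis unfolding tau_def by (simp add: sum.distrib)
qed

lemma card_facts: assumes e: "e \<in> complete_bip3_edges m n"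
  shows "card (Cset m n e 0) = m - card (e \<inter> {..<m})" "card (Cset m n e 1) = card (e \<inter> {..<m})"
    "card (Cset m n e 2) = card (e \<inter> {m..<m+n})" "card (Cset m n e 3) = n - card (e \<inter> {m..<m+n})"
    "card (e \<inter> {..<m}) + card (e \<inter> {m..<m+n}) = 3"
    "card (e \<inter> {..<m}) \<ge> 1" "card (e \<inter> {m..<m+n}) \<ge> 1"
proof -
  have eE: "e \<subseteq> {0..<m+n}" "card e = 3" "e \<inter> {0..<m} \<noteq> {}" "e \<inter> {m..<m+n} \<noteq> {}"
    using e unfolding E_mem by auto
  have fe: "finite e" using eE(1) by (rule finite_subset) simp
  have "Cset m n e 0 = {..<m} - (e \<inter> {..<m})" unfolding Cset_def by (auto simp: ind_def)
  then show "card (Cset m n e 0) = m - card (e \<inter> {..<m})" by (simp add: card_Diff_subset fe)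
  have "Cset m n e 1 = e \<inter> {..<m}" unfolding Cset_def by (auto simp: ind_def)
  then show "card (Cset m n e 1) = card (e \<inter> {..<m})" by simp
  have "Cset m n e 2 = e \<inter> {m..<m+n}" unfolding Cset_def using eE(1) by (auto simp: ind_def)
  then show "card (Cset m n e 2) = card (e \<inter> {m..<m+n})" by simp
  have "Cset m n e 3 = {m..<m+n} - (e \<inter> {m..<m+n})" unfolding Cset_def by (auto simp: ind_def)
  then show "card (Cset m n e 3) = n - card (e \<inter> {m..<m+n})" by (simp add: card_Diff_subset fe)
  have "e = (e \<inter> {..<m}) \<union> (e \<inter> {m..<m+n})" using eE(1) by auto
  moreover have "(e \<inter> {..<m}) \<inter> (e \<inter> {m..<m+n}) = {}" by auto
  ultimately have "card e = card (e \<inter> {..<m}) + card (e \<inter> {m..<m+n})"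
    using fe by (metis card_Un_disjoint finite_Int)
  then show "card (e \<inter> {..<m}) + card (e \<inter> {m..<m+n}) = 3" using eE(2) by simp
  have "e \<inter> {..<m} \<noteq> {}" using eE(3) by (simp add: lessThan_atLeast0)
  then show "card (e \<inter> {..<m}) \<ge> 1" using fe by (simp add: Suc_leI card_gt_0_iff)
  show "card (e \<inter> {m..<m+n}) \<ge> 1" using eE(4) fe by (simp add: Suc_leI card_gt_0_iff)
qed

lemma bounds: assumes e: "e \<in> complete_bip3_edges m n" and mn: "m \<ge> 3" "n \<ge> 3"
  shows "((sig m n e x 0)^2 \<le> (real m - 2) * tau m n e x 0 \<and> (sig m n e x 1)^2 \<le> 2 * tau m n e x 1 \<and>
          (sig m n e x 2)^2 \<le> tau m n e x 2 \<and> (sig m n e x 3)^2 \<le> (real n - 1) * tau m n e x 3)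
       \<or> ((sig m n e x 0)^2 \<le> (real m - 1) * tau m n e x 0 \<and> (sig m n e x 1)^2 \<le> tau m n e x 1 \<and>
          (sig m n e x 2)^2 \<le> 2 * tau m n e x 2 \<and> (sig m n e x 3)^2 \<le> (real n - 2) * tau m n e x 3)"
proof -
  note cf = card_facts[OF e]
  note cs = cs_K[of m n e x 0] cs_K[of m n e x 1] cs_K[of m n e x 2] cs_K[of m n e x 3]
  show ?thesis
  proof (cases "card (e \<inter> {..<m}) = 2")
    case True
    then have "card (e \<inter> {m..<m+n}) = 1" using cf(5) by simp
    then have "card (Cset m n e 0) = m - 2" "card (Cset m n e 1) = 2" "card (Cset m n e 2) = 1"
      "card (Cset m n e 3) = n - 1" using cf(1-4) True by simp_all
    then show ?thesis using cs mn by (simp add: of_nat_diff)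
  next
    case False
    then have "card (e \<inter> {..<m}) = 1" "card (e \<inter> {m..<m+n}) = 2" using cf(5-7) by simp_all
    then have "card (Cset m n e 0) = m - 1" "card (Cset m n e 1) = 1" "card (Cset m n e 2) = 2"
      "card (Cset m n e 3) = n - 2" using cf(1-4) by simp_all
    then show ?thesis using cs mn by (simp add: of_nat_diff)
  qed
qed

lemma C1: assumes e: "e \<in> complete_bip3_edges m n" and mn: "m \<ge> 3" "n \<ge> 3"
  and x: "\<exists>i<m+n. x i \<noteq> 0"
  shows "Qf (m+n) (seidel_matrix (m+n) (complete_bip3_edges m n - {e})) x >
         cc (real m) (real n) * (\<Sum>i<m+n. (x i)^2)"
proof -
  have mn': "real m \<ge> 3" "real n \<ge> 3" using mn by auto
  have "(\<Sum>i<m+n. (x i)^2) > 0"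
  proof -
    obtain i where i: "i < m+n" "x i \<noteq> 0" using x by blast
    have "(x i)^2 \<le> (\<Sum>i<m+n. (x i)^2)" using i(1) by (intro member_le_sum) auto
    moreover have "(x i)^2 > 0" using i(2) by simp
    ultimately show ?thesis by linarith
  qed
  then have tp: "tau m n e x 0 + tau m n e x 1 + tau m n e x 2 + tau m n e x 3 > 0"
    using sum_tau[where e=e and x=x and m=m and n=n] by linarith
  show ?thesis unfolding Qf_Fm[OF e] sum_tau[where e=e and x=x and m=m and n=n]
    using bounds[OF e mn, of x]
  proof
    assume h: "(sig m n e x 0)^2 \<le> (real m - 2) * tau m n e x 0 \<and> (sig m n e x 1)^2 \<le> 2 * tau m n e x 1 \<and>
          (sig m n e x 2)^2 \<le> tau m n e x 2 \<and> (sig m n e x 3)^2 \<le> (real n - 1) * tau m n e x 3"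
    show "Fm (real m) (real n) (sig m n e x 0) (sig m n e x 1) (sig m n e x 2) (sig m n e x 3)
       (tau m n e x 0) (tau m n e x 1) (tau m n e x 2) (tau m n e x 3)
       > cc (real m) (real n) * (tau m n e x 0 + tau m n e x 1 + tau m n e x 2 + tau m n e x 3)"
      using NumL1[OF mn'] h tp by blast
  next
    assume h: "(sig m n e x 0)^2 \<le> (real m - 1) * tau m n e x 0 \<and> (sig m n e x 1)^2 \<le> tau m n e x 1 \<and>
          (sig m n e x 2)^2 \<le> 2 * tau m n e x 2 \<and> (sig m n e x 3)^2 \<le> (real n - 2) * tau m n e x 3"
    have tp': "tau m n e x 3 + tau m n e x 2 + tau m n e x 1 + tau m n e x 0 > 0" using tp by linarith
    have "Fm (real n) (real m) (sig m n e x 3) (sig m n e x 2) (sig m n e x 1) (sig m n e x 0)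
            (tau m n e x 3) (tau m n e x 2) (tau m n e x 1) (tau m n e x 0)
         > cc (real n) (real m) * (tau m n e x 3 + tau m n e x 2 + tau m n e x 1 + tau m n e x 0)"
      using NumL1[OF mn'(2,1)] h tp' by blast
    then show "Fm (real m) (real n) (sig m n e x 0) (sig m n e x 1) (sig m n e x 2) (sig m n e x 3)
       (tau m n e x 0) (tau m n e x 1) (tau m n e x 2) (tau m n e x 3)
       > cc (real m) (real n) * (tau m n e x 0 + tau m n e x 1 + tau m n e x 2 + tau m n e x 3)"
      using Fm_sym cc_sym by (simp add: algebra_simps)
  qed
qed

lemma C2: assumes e: "e \<in> complete_bip3_edges m n" and mn: "m \<ge> 3" "n \<ge> 3"
  and x: "(\<Sum>i<m+n. x i) = 0"
  shows "Qf (m+n) (seidel_matrix (m+n) (complete_bip3_edges m n - {e})) x \<ge> 0"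
proof -
  have mn': "real m \<ge> 3" "real n \<ge> 3" using mn by auto
  have sz: "sig m n e x 0 + sig m n e x 1 + sig m n e x 2 + sig m n e x 3 = 0" using x sum_sig[where e=e and x=x and m=m and n=n] by linarith
  show ?thesis unfolding Qf_Fm[OF e]
    using bounds[OF e mn, of x]
  proof
    assume h: "(sig m n e x 0)^2 \<le> (real m - 2) * tau m n e x 0 \<and> (sig m n e x 1)^2 \<le> 2 * tau m n e x 1 \<and>
          (sig m n e x 2)^2 \<le> tau m n e x 2 \<and> (sig m n e x 3)^2 \<le> (real n - 1) * tau m n e x 3"
    show "Fm (real m) (real n) (sig m n e x 0) (sig m n e x 1) (sig m n e x 2) (sig m n e x 3)
       (tau m n e x 0) (tau m n e x 1) (tau m n e x 2) (tau m n e x 3) \<ge> 0"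
      using NumL2[OF mn'] h sz by blast
  next
    assume h: "(sig m n e x 0)^2 \<le> (real m - 1) * tau m n e x 0 \<and> (sig m n e x 1)^2 \<le> tau m n e x 1 \<and>
          (sig m n e x 2)^2 \<le> 2 * tau m n e x 2 \<and> (sig m n e x 3)^2 \<le> (real n - 2) * tau m n e x 3"
    have sz': "sig m n e x 3 + sig m n e x 2 + sig m n e x 1 + sig m n e x 0 = 0" using sz by linarith
    have "Fm (real n) (real m) (sig m n e x 3) (sig m n e x 2) (sig m n e x 1) (sig m n e x 0)
            (tau m n e x 3) (tau m n e x 2) (tau m n e x 1) (tau m n e x 0) \<ge> 0"
      using NumL2[OF mn'(2,1)] h sz' by blast
    then show "Fm (real m) (real n) (sig m n e x 0) (sig m n e x 1) (sig m n e x 2) (sig m n e x 3)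
       (tau m n e x 0) (tau m n e x 1) (tau m n e x 2) (tau m n e x 3) \<ge> 0"
      using Fm_sym by simp
  qed
qed


lemma kap_sym: "kap m n i j = kap m n j i" unfolding kap_def by auto

lemma S_eig: assumes mn: "m \<ge> 3" "n \<ge> 3" and i: "i < m+n"
  shows "(\<Sum>j<m+n. seidel_matrix (m+n) (complete_bip3_edges m n) $$ (i,j) *
      (if j < m then (5 - 2*real m - 2*real n) * real n
       else cc (real m) (real n) - (real m - 1)*(1 - 2*real n)))
    = cc (real m) (real n) * (if i < m then (5 - 2*real m - 2*real n) * real n
       else cc (real m) (real n) - (real m - 1)*(1 - 2*real n))"
proof -
  define c where "c = cc (real m) (real n)"
  define \<alpha> where "\<alpha> = (5 - 2*real m - 2*real n) * real n"
  define \<beta> where "\<beta> = c - (real m - 1)*(1 - 2*real n)"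
  define x where "x j = (if j < m then \<alpha> else \<beta>)" for j
  have hq: "c^2 - TT (real m) (real n) * c + DD (real m) (real n) = 0"
    unfolding c_def using cc_root by simp
  have "(\<Sum>j<m+n. seidel_matrix (m+n) (complete_bip3_edges m n) $$ (i,j) * x j)
      = (\<Sum>j<m+n. kap m n i j * x j - (if j = i then kap m n i i * x i else 0))"
    using S_entry[OF i] by (intro sum.cong refl) auto
  also have "\<dots> = (\<Sum>j<m+n. kap m n i j * x j) - kap m n i i * x i"
    using i by (simp add: sum_subtractf)
  also have "(\<Sum>j<m+n. kap m n i j * x j) = (\<Sum>j<m. kap m n i j * x j) + (\<Sum>j\<in>{m..<m+n}. kap m n i j * x j)"
    by (rule split_sum)
  finally have e1: "(\<Sum>j<m+n. seidel_matrix (m+n) (complete_bip3_edges m n) $$ (i,j) * x j) =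
     (\<Sum>j<m. kap m n i j * x j) + (\<Sum>j\<in>{m..<m+n}. kap m n i j * x j) - kap m n i i * x i" .
  have "(\<Sum>j<m+n. seidel_matrix (m+n) (complete_bip3_edges m n) $$ (i,j) * x j) = c * x i"
  proof (cases "i < m")
    case True
    have s1: "(\<Sum>j<m. kap m n i j * x j) = real m * ((1 - 2*real n) * \<alpha>)"
      using True by (simp add: kap_def x_def)
    have s2: "(\<Sum>j\<in>{m..<m+n}. kap m n i j * x j) = real n * ((5 - 2*real m - 2*real n) * \<beta>)"
      using True by (simp add: kap_def x_def)
    have "real m * ((1 - 2*real n) * \<alpha>) + real n * ((5 - 2*real m - 2*real n) * \<beta>) - (1 - 2*real n) * \<alpha> = c * \<alpha>"
      using ev_eq1[of "real m" "real n" c] unfolding \<alpha>_def \<beta>_def by (simp add: algebra_simps)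
    then show ?thesis unfolding e1 s1 s2 using True by (simp add: kap_def x_def)
  next
    case False
    have s1: "(\<Sum>j<m. kap m n i j * x j) = real m * ((5 - 2*real m - 2*real n) * \<alpha>)"
      using False by (simp add: kap_def x_def)
    have s2: "(\<Sum>j\<in>{m..<m+n}. kap m n i j * x j) = real n * ((1 - 2*real m) * \<beta>)"
      using False by (simp add: kap_def x_def)
    have "real m * ((5 - 2*real m - 2*real n) * \<alpha>) + real n * ((1 - 2*real m) * \<beta>) - (1 - 2*real m) * \<beta> = c * \<beta>"
      using ev_eq2[OF hq] unfolding \<alpha>_def \<beta>_def by (simp add: algebra_simps)
    then show ?thesis unfolding e1 s1 s2 using False by (simp add: kap_def x_def)
  qed
  then show ?thesis unfolding x_def \<alpha>_def \<beta>_def c_def .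
qed

theorem theorem2p12:
  fixes m n :: nat and e :: "nat set"
  assumes "m \<ge> 3" and "n \<ge> 3"
    and "e \<in> complete_bip3_edges m n"
  shows "seidel_energy (m + n) (complete_bip3_edges m n)
       > seidel_energy (m + n) (complete_bip3_edges m n - {e})"
proof -
  define N where "N = m + n"
  define A where "A = seidel_matrix N (complete_bip3_edges m n)"
  define A' where "A' = seidel_matrix N (complete_bip3_edges m n - {e})"
  define c where "c = cc (real m) (real n)"
  have cn: "c < 0" unfolding c_def using cc_neg assms by simp
  have cA: "A \<in> carrier_mat N N" and cA': "A' \<in> carrier_mat N N"
    unfolding A_def A'_def seidel_matrix_def by auto
  have symA: "\<And>i j. i<N \<Longrightarrow> j<N \<Longrightarrow> A$$(i,j) = A$$(j,i)"
    unfolding A_def N_def using S_entry kap_sym by simp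
  have symA': "\<And>i j. i<N \<Longrightarrow> j<N \<Longrightarrow> A'$$(i,j) = A'$$(j,i)"
    unfolding A'_def N_def using Sp_entry[OF _ _ assms(3)] kap_sym by auto
  have d0: "\<And>i. i<N \<Longrightarrow> A$$(i,i) = 0" unfolding A_def seidel_matrix_def by simp
  have d0': "\<And>i. i<N \<Longrightarrow> A'$$(i,i) = 0" unfolding A'_def seidel_matrix_def by simp
  define x where "x j = (if j < m then (5 - 2*real m - 2*real n) * real n
       else cc (real m) (real n) - (real m - 1)*(1 - 2*real n))" for j
  have xnz: "\<exists>i<N. x i \<noteq> 0"
  proof -
    have "x 0 \<noteq> 0" unfolding x_def using assms by simp
    moreover have "0 < N" unfolding N_def using assms by simp
    ultimately show ?thesis by blast
  qed
  have ev: "\<And>i. i<N \<Longrightarrow> (\<Sum>j<N. A$$(i,j) * x j) = c * x i"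
    unfolding A_def N_def c_def x_def using S_eig[OF assms(1,2)] by simp
  have low: "seidel_energy N (complete_bip3_edges m n) \<ge> - 2 * c"
    unfolding seidel_energy_def A_def[symmetric]
    by (rule energy_lower[OF cA symA d0 xnz ev cn])
  have C1': "\<And>x. (\<exists>i<N. x i \<noteq> 0) \<Longrightarrow> Qf N A' x > c * (\<Sum>i<N. (x i)^2)"
    unfolding A'_def N_def c_def using C1[OF assms(3) assms(1,2)] by blast
  have C2': "\<And>x. (\<Sum>i<N. x i) = 0 \<Longrightarrow> Qf N A' x \<ge> 0"
    unfolding A'_def N_def using C2[OF assms(3) assms(1,2)] by blast
  have up: "seidel_energy N (complete_bip3_edges m n - {e}) < - 2 * c"
    unfolding seidel_energy_def A'_def[symmetric]
    by (rule energy_upper[OF cA' symA' d0' C1' C2' cn])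
  show ?thesis using low up unfolding N_def by linarith
qed

end
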